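(* In the V-trace setting of the context, assume $|\mathcal S|\ge2$, let $\gamma$ be the contraction factor and $A$ the noise constant described in the context, and let $\epsilon_k=\frac{\epsilon}{k+K}$ with $\epsilon=\frac{4}{1-\gamma}$ and $K=\frac{64(A+2)\log|\mathcal S|}{(1-\gamma)^3}$. Then for all $k\ge0$, $$\mathbb{E}[\|V_k-V_{\pi_{\bar\rho}}\|_\infty^2]\le1024e^2\big(\|V_0-V_{\pi_{\bar\rho}}\|_\infty^2+2\|V_{\pi_{\bar\rho}}\|_\infty^2+1\big)\frac{(A+2)\log|\mathcal S|}{(1-\gamma)^3}\frac{1}{k+K}.$$
   Context: Finite MDP: finite state space $\mathcal S$, finite action space $\mathcal A$, transition matrices $P_a(s,s')$, reward $\mathcal R:\mathcal S\times\mathcal A\to[0,1]$, discount $\beta\in(0,1)$. A policy $\pi$ gives probabilities $\pi(a|s)$; its value function is $V_\pi(s)=\mathbb{E}_\pi[\sum_{k\ge0}\beta^k\mathcal R(S_k,A_k)\mid S_0=s]$. Let $\pi$ (target) and $\pi'$ (behavior) be policies with $\{a:\pi(a|s)>0\}\subseteq\{a:\pi'(a|s)>0\}$ for all $s$. Fix truncation levels $\bar\rho\ge\bar c>0$ and horizon $n\ge1$. For a trajectory under $\pi'$, $c_t=\min(\bar c,\pi(A_t|S_t)/\pi'(A_t|S_t))$, $\rho_t=\min(\bar\rho,\pi(A_t|S_t)/\pi'(A_t|S_t))$, empty products equal $1$. The V-trace algorithm: given deterministic $V_0$ and stepsizes $\epsilon_k$, at each iteration $k$, for each $s$ a fresh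 trajectory $S_0^s=s,A_0^s,\dots,S_n^s$ is generated under $\pi'$ (independently of the past given the current iterate), with weights $c_t^s,\rho_t^s$, and $V_{k+1}(s)=V_k(s)+\epsilon_k\sum_{t=0}^{n-1}\beta^t(\prod_{j=0}^{t-1}c_j^s)\rho_t^s(\mathcal R(S_t^s,A_t^s)+\beta V_k(S_{t+1}^s)-V_k(S_t^s))$. Let $\kappa_c=\min_s\mathbb{E}_{\pi'}[c_0\mid S_0=s]$, $\kappa_\rho=\min_s\mathbb{E}_{\pi'}[\rho_0\mid S_0=s]$, $\gamma=1-\frac{(1-\beta)(1-(\beta\kappa_c)^n)\kappa_\rho}{1-\beta\kappa_c}$. Let $A=\frac{32\bar\rho^2}{(1-\beta\bar c)^2}$ if $\beta\bar c<1$, $A=32\bar\rho^2n^2$ if $\beta\bar c=1$, $A=\frac{32\bar\rho^2(\beta\bar c)^{2n}}{(\beta\bar c-1)^2}$ if $\beta\bar c>1$. Let $\pi_{\bar\rho}(a|s)=\frac{\min(\bar\rho\pi'(a|s),\pi(a|s))}{\sum_b\min(\bar\rho\pi'(b|s),\pi(b|s))}$ and $V_{\pi_{\bar\rho}}$ its value function. *)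

theory Defs
  imports "HOL-Probability.Probability"
begin

text \<open>Finite MDP: states 's::finite, actions 'a::finite, transitions P a s :: 's pmf
  (so P_a(s,s') = pmf (P a s) s'), reward R s a, discount beta.
  Stochastic policies as pmfs: pi(a|s) = pmf (pol s) a.\<close>

fun exp_reward :: "('a \<Rightarrow> 's \<Rightarrow> 's pmf) \<Rightarrow> ('s \<Rightarrow> 'a \<Rightarrow> real) \<Rightarrow> ('s::finite \<Rightarrow> 'a::finite \<Rightarrow> real) \<Rightarrow> nat \<Rightarrow> 's \<Rightarrow> real" where
  "exp_reward P R pol 0 s = (\<Sum>a\<in>UNIV. pol s a * R s a)"
| "exp_reward P R pol (Suc k) s =
     (\<Sum>a\<in>UNIV. pol s a * (\<Sum>s'\<in>UNIV. pmf (P a s) s' * exp_reward P R pol k s'))"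

definition value_fun :: "('a \<Rightarrow> 's \<Rightarrow> 's pmf) \<Rightarrow> ('s \<Rightarrow> 'a \<Rightarrow> real) \<Rightarrow> real \<Rightarrow> ('s::finite \<Rightarrow> 'a::finite \<Rightarrow> real) \<Rightarrow> 's \<Rightarrow> real" where
  "value_fun P R \<beta> pol s = (\<Sum>k. \<beta> ^ k * exp_reward P R pol k s)"

definition clipped_policy :: "real \<Rightarrow> ('s \<Rightarrow> 'a pmf) \<Rightarrow> ('s \<Rightarrow> 'a pmf) \<Rightarrow> 's \<Rightarrow> 'a::finite \<Rightarrow> real" where
  "clipped_policy \<rho>bar \<pi> \<pi>' s a =
     min (\<rho>bar * pmf (\<pi>' s) a) (pmf (\<pi> s) a) / (\<Sum>b\<in>UNIV. min (\<rho>bar * pmf (\<pi>' s) b) (pmf (\<pi> s) b))"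

text \<open>Trajectory of length n under behaviour policy: list of (S_t, A_t) for t < n, and S_n.\<close>
fun traj :: "('a \<Rightarrow> 's \<Rightarrow> 's pmf) \<Rightarrow> ('s \<Rightarrow> 'a pmf) \<Rightarrow> nat \<Rightarrow> 's \<Rightarrow> (('s \<times> 'a) list \<times> 's) pmf" where
  "traj P \<pi>' 0 s = return_pmf ([], s)"
| "traj P \<pi>' (Suc n) s =
     do { a \<leftarrow> \<pi>' s; s' \<leftarrow> P a s; (tr, sf) \<leftarrow> traj P \<pi>' n s'; return_pmf ((s, a) # tr, sf) }"

definition traj_state :: "('s \<times> 'a) list \<times> 's \<Rightarrow> nat \<Rightarrow> 's" where
  "traj_state \<tau> t = (if t < length (fst \<tau>) then fst (fst \<tau> ! t) else snd \<tau>)"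

definition traj_action :: "('s \<times> 'a) list \<times> 's \<Rightarrow> nat \<Rightarrow> 'a" where
  "traj_action \<tau> t = snd (fst \<tau> ! t)"

definition is_ratio :: "('s \<Rightarrow> 'a pmf) \<Rightarrow> ('s \<Rightarrow> 'a pmf) \<Rightarrow> 's \<Rightarrow> 'a \<Rightarrow> real" where
  "is_ratio \<pi> \<pi>' s a = pmf (\<pi> s) a / pmf (\<pi>' s) a"

definition vtrace_incr ::
  "('s \<Rightarrow> 'a \<Rightarrow> real) \<Rightarrow> real \<Rightarrow> ('s \<Rightarrow> 'a pmf) \<Rightarrow> ('s \<Rightarrow> 'a pmf) \<Rightarrow> real \<Rightarrow> real \<Rightarrow> nat
   \<Rightarrow> ('s \<Rightarrow> real) \<Rightarrow> ('s \<times> 'a) list \<times> 's \<Rightarrow> real" where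
  "vtrace_incr R \<beta> \<pi> \<pi>' cbar \<rho>bar n V \<tau> =
     (\<Sum>t<n. \<beta> ^ t
        * (\<Prod>j<t. min cbar (is_ratio \<pi> \<pi>' (traj_state \<tau> j) (traj_action \<tau> j)))
        * min \<rho>bar (is_ratio \<pi> \<pi>' (traj_state \<tau> t) (traj_action \<tau> t))
        * (R (traj_state \<tau> t) (traj_action \<tau> t) + \<beta> * V (traj_state \<tau> (Suc t)) - V (traj_state \<tau> t)))"

fun vtrace_dist ::
  "('a \<Rightarrow> 's \<Rightarrow> 's pmf) \<Rightarrow> ('s \<Rightarrow> 'a \<Rightarrow> real) \<Rightarrow> real \<Rightarrow> ('s::finite \<Rightarrow> 'a pmf) \<Rightarrow> ('s \<Rightarrow> 'a pmf)
   \<Rightarrow> real \<Rightarrow> real \<Rightarrow> nat \<Rightarrow> (nat \<Rightarrow> real) \<Rightarrow> ('s \<Rightarrow> real) \<Rightarrow> nat \<Rightarrow> ('s \<Rightarrow> real) pmf" where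
  "vtrace_dist P R \<beta> \<pi> \<pi>' cbar \<rho>bar n \<epsilon> V0 0 = return_pmf V0"
| "vtrace_dist P R \<beta> \<pi> \<pi>' cbar \<rho>bar n \<epsilon> V0 (Suc k) =
     do { V \<leftarrow> vtrace_dist P R \<beta> \<pi> \<pi>' cbar \<rho>bar n \<epsilon> V0 k;
          \<tau>s \<leftarrow> Pi_pmf UNIV undefined (\<lambda>s. traj P \<pi>' n s);
          return_pmf (\<lambda>s. V s + \<epsilon> k * vtrace_incr R \<beta> \<pi> \<pi>' cbar \<rho>bar n V (\<tau>s s)) }"

definition sup_norm :: "('s::finite \<Rightarrow> real) \<Rightarrow> real" where
  "sup_norm f = Max (range (\<lambda>s. \<bar>f s\<bar>))"

definition kappa_c :: "('s::finite \<Rightarrow> 'a pmf) \<Rightarrow> ('s \<Rightarrow> 'a pmf) \<Rightarrow> real \<Rightarrow> real" where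
  "kappa_c \<pi> \<pi>' cbar = Min (range (\<lambda>s. measure_pmf.expectation (\<pi>' s) (\<lambda>a. min cbar (is_ratio \<pi> \<pi>' s a))))"

definition kappa_rho :: "('s::finite \<Rightarrow> 'a pmf) \<Rightarrow> ('s \<Rightarrow> 'a pmf) \<Rightarrow> real \<Rightarrow> real" where
  "kappa_rho \<pi> \<pi>' \<rho>bar = Min (range (\<lambda>s. measure_pmf.expectation (\<pi>' s) (\<lambda>a. min \<rho>bar (is_ratio \<pi> \<pi>' s a))))"

definition vtrace_gamma :: "real \<Rightarrow> real \<Rightarrow> real \<Rightarrow> nat \<Rightarrow> real" where
  "vtrace_gamma \<beta> \<kappa>c \<kappa>\<rho> n = 1 - (1 - \<beta>) * (1 - (\<beta> * \<kappa>c) ^ n) * \<kappa>\<rho> / (1 - \<beta> * \<kappa>c)"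

definition vtrace_A :: "real \<Rightarrow> real \<Rightarrow> real \<Rightarrow> nat \<Rightarrow> real" where
  "vtrace_A \<beta> cbar \<rho>bar n =
     (if \<beta> * cbar < 1 then 32 * \<rho>bar\<^sup>2 / (1 - \<beta> * cbar)\<^sup>2
      else if \<beta> * cbar = 1 then 32 * \<rho>bar\<^sup>2 * (real n)\<^sup>2
      else 32 * \<rho>bar\<^sup>2 * (\<beta> * cbar) ^ (2 * n) / (\<beta> * cbar - 1)\<^sup>2)"

end

theory Submission
  imports Defs
begin

lemma young0_ext:
  fixes a b :: real
  assumes "0 \<le> \<alpha>" "0 \<le> \<beta>" "\<alpha>+\<beta> = 1" "a\<ge>0" "b\<ge>0"
  shows "a powr \<alpha> * b powr \<beta> \<le> \<alpha>*a + \<beta>*b"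
proof (cases "a = 0 \<or> b = 0")
  case True then show ?thesis using assms by auto
next
  case False then show ?thesis using assms Youngs_inequality_0[of \<alpha> \<beta> a b] by auto
qed

lemma holder_sum:
  fixes u v :: "'i \<Rightarrow> real"
  assumes I: "finite I" and u: "\<And>i. i\<in>I \<Longrightarrow> u i \<ge> 0" and v: "\<And>i. i\<in>I \<Longrightarrow> v i \<ge> 0"
    and ab: "0 \<le> \<alpha>" "0 \<le> \<beta>" "\<alpha>+\<beta> = 1"
  shows "(\<Sum>i\<in>I. u i powr \<alpha> * v i powr \<beta>) \<le> (\<Sum>i\<in>I. u i) powr \<alpha> * (\<Sum>i\<in>I. v i) powr \<beta>"
proof -
  define U where "U = (\<Sum>i\<in>I. u i)"
  define V where "V = (\<Sum>i\<in>I. v i)"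
  have U0: "U \<ge> 0" "V \<ge> 0" using u v by (auto simp: U_def V_def intro: sum_nonneg)
  show ?thesis
  proof (cases "U = 0 \<or> V = 0")
    case True
    then have "\<forall>i\<in>I. u i = 0 \<or> v i = 0"
      using sum_nonneg_eq_0_iff[OF I] u v unfolding U_def V_def by blast
    then have "(\<Sum>i\<in>I. u i powr \<alpha> * v i powr \<beta>) = 0" by (intro sum.neutral) auto
    then show ?thesis by (simp add: U_def[symmetric] V_def[symmetric])
  next
    case False
    then have UV: "U > 0" "V > 0" using U0 by auto
    have "u i powr \<alpha> * v i powr \<beta> \<le> U powr \<alpha> * V powr \<beta> * (\<alpha> * (u i / U) + \<beta> * (v i / V))"
      if i: "i \<in> I" for i
    proof -
      have "(u i / U) powr \<alpha> * (v i / V) powr \<beta> \<le> \<alpha> * (u i / U) + \<beta> * (v i / V)"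
        using young0_ext[OF ab, of "u i / U" "v i / V"] u[OF i] v[OF i] UV by auto
      moreover have "u i powr \<alpha> * v i powr \<beta> = U powr \<alpha> * V powr \<beta> * ((u i / U) powr \<alpha> * (v i / V) powr \<beta>)"
        using u[OF i] v[OF i] UV by (simp add: powr_divide)
      ultimately show ?thesis using UV by (simp add: mult_left_mono)
    qed
    then have "(\<Sum>i\<in>I. u i powr \<alpha> * v i powr \<beta>) \<le> (\<Sum>i\<in>I. U powr \<alpha> * V powr \<beta> * (\<alpha> * (u i / U) + \<beta> * (v i / V)))"
      by (rule sum_mono)
    also have "\<dots> = U powr \<alpha> * V powr \<beta> * (\<alpha> * (\<Sum>i\<in>I. u i) / U + \<beta> * (\<Sum>i\<in>I. v i) / V)"
      by (simp add: sum_distrib_left sum.distrib sum_divide_distrib[symmetric] algebra_simps)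
    also have "\<dots> = U powr \<alpha> * V powr \<beta>" using UV ab by (simp add: U_def[symmetric] V_def[symmetric])
    finally show ?thesis by (simp add: U_def V_def)
  qed
qed

definition NN :: "nat \<Rightarrow> ('s::finite \<Rightarrow> real) \<Rightarrow> real" where
  "NN m x = (\<Sum>s\<in>UNIV. x s ^ (2*m))"
definition gg :: "nat \<Rightarrow> ('s::finite \<Rightarrow> real) \<Rightarrow> real" where
  "gg m x = NN m x powr (1/real m)"
definition DD :: "nat \<Rightarrow> ('s::finite \<Rightarrow> real) \<Rightarrow> ('s \<Rightarrow> real) \<Rightarrow> real" where
  "DD m x y = 2 * NN m x powr (1/real m - 1) * (\<Sum>s\<in>UNIV. x s ^ (2*m-1) * y s)"

lemma NN_nonneg: "NN m x \<ge> 0"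
  unfolding NN_def by (intro sum_nonneg) (simp add: zero_le_even_power)

lemma gg_nonneg: "gg m x \<ge> 0" unfolding gg_def by simp

lemma NN_zero_iff: assumes "m > 0" shows "NN m x = 0 \<longleftrightarrow> x = (\<lambda>_. 0)"
proof -
  have "NN m x = 0 \<longleftrightarrow> (\<forall>s. x s ^ (2*m) = 0)"
    unfolding NN_def by (subst sum_nonneg_eq_0_iff) (auto simp: zero_le_even_power)
  then show ?thesis using assms by (auto simp: fun_eq_iff)
qed

lemma NN_scale: "NN m (\<lambda>s. c * x s) = c ^ (2*m) * NN m x"
  unfolding NN_def by (simp add: power_mult_distrib sum_distrib_left)

lemma gg_scale: assumes "m > 0" shows "gg m (\<lambda>s. c * x s) = c\<^sup>2 * gg m x"
proof -
  have "(c ^ (2*m)) powr (1/real m) = c\<^sup>2"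
  proof (cases "c = 0")
    case True then show ?thesis using assms by simp
  next
    case False
    have "c ^ (2*m) = (c\<^sup>2) ^ m" by (simp add: power_mult)
    also have "\<dots> = (c\<^sup>2) powr (real m)" using False by (simp add: powr_realpow)
    finally show ?thesis using assms by (simp add: powr_powr)
  qed
  then show ?thesis unfolding gg_def NN_scale
    by (simp add: powr_mult zero_le_even_power)
qed

lemma DD_self: assumes "m > 0" shows "DD m x x = 2 * gg m x"
proof (cases "NN m x = 0")
  case True then show ?thesis by (simp add: DD_def gg_def)
next
  case False
  then have pos: "NN m x > 0" using NN_nonneg[of m x] by linarith
  have "(\<Sum>s\<in>UNIV. x s ^ (2*m-1) * x s) = NN m x"
    unfolding NN_def using assms
    by (intro sum.cong refl) (metis One_nat_def Suc_pred mult_pos_pos pos2 power_Suc2)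
  then show ?thesis using pos unfolding DD_def gg_def
    by (simp add: powr_diff)
qed

lemma DD_lin: "DD m x (\<lambda>s. c * y s) = c * DD m x y"
  unfolding DD_def by (simp add: sum_distrib_left algebra_simps)

lemma DD_add: "DD m x (\<lambda>s. y s + w s) = DD m x y + DD m x w"
  unfolding DD_def by (simp add: sum.distrib algebra_simps)

lemma pow_powr_aux: assumes "m \<ge> 2" 
  shows "(z ^ (2*m)) powr ((real m - 1)/real m) = (z::real) ^ (2*m-2)"
    and "(z ^ (2*m)) powr (1/real m) = z\<^sup>2"
proof -
  have A: "z ^ (2*m) = (z\<^sup>2) ^ m" by (simp add: power_mult)
  show "(z ^ (2*m)) powr ((real m - 1)/real m) = (z::real) ^ (2*m-2)"
  proof (cases "z = 0")
    case True then show ?thesis using assms by (simp add: power_0_left)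
  next
    case False
    have "(z ^ (2*m)) powr ((real m - 1)/real m) = (z\<^sup>2) powr (real m * ((real m - 1)/real m))"
      using False by (simp add: A powr_realpow[symmetric] powr_powr)
    also have "\<dots> = (z\<^sup>2) powr (real (m - 1))" using assms by (simp add: of_nat_diff)
    also have "\<dots> = (z\<^sup>2) ^ (m-1)" using False by (simp add: powr_realpow)
    also have "\<dots> = z ^ (2*m-2)" by (simp add: power_mult[symmetric] diff_mult_distrib2)
    finally show ?thesis .
  qed
  show "(z ^ (2*m)) powr (1/real m) = z\<^sup>2"
  proof (cases "z = 0")
    case True then show ?thesis using assms by simp
  next
    case False
    then show ?thesis using assms
      by (simp add: A powr_realpow[symmetric] powr_powr)
  qed
qed

lemma smooth_main:
  fixes x h :: "'s::finite \<Rightarrow> real"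
  assumes m: "m \<ge> 2" and nz: "\<And>t. NN m (\<lambda>s. x s + t * h s) > 0"
  shows "gg m (\<lambda>s. x s + h s) \<le> gg m x + DD m x h + (2 * real m - 1) * gg m h"
proof -
  define z where "z t s = x s + t * h s" for t s
  define Nf where "Nf t = NN m (z t)" for t
  define N1 where "N1 t = (\<Sum>s\<in>UNIV. real (2*m) * z t s ^ (2*m-1) * h s)" for t
  define N2 where "N2 t = (\<Sum>s\<in>UNIV. real (2*m) * real (2*m-1) * z t s ^ (2*m-2) * (h s)\<^sup>2)" for t
  define r where "r = 1 / real m"
  define \<psi> where "\<psi> t = Nf t powr r" for t
  define \<psi>1 where "\<psi>1 t = r * Nf t powr (r - 1) * N1 t" for t
  define \<psi>2 where "\<psi>2 t = r * ((r - 1) * Nf t powr (r - 2) * N1 t * N1 t + Nf t powr (r - 1) * N2 t)" for t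
  have pos: "Nf t > 0" for t using nz unfolding Nf_def z_def by auto
  have d1: "(Nf has_real_derivative N1 t) (at t)" for t
  proof -
    have "((\<lambda>t. z t s ^ (2*m)) has_real_derivative real (2*m) * z t s ^ (2*m-1) * h s) (at t)" for s
      unfolding z_def by (auto intro!: derivative_eq_intros)
    then show ?thesis unfolding Nf_def NN_def N1_def
      by (auto intro!: DERIV_sum)
  qed
  have d2: "(N1 has_real_derivative N2 t) (at t)" for t
  proof -
    have "((\<lambda>t. real (2*m) * z t s ^ (2*m-1) * h s) has_real_derivative real (2*m) * real (2*m-1) * z t s ^ (2*m-2) * (h s)\<^sup>2) (at t)" for s
      unfolding z_def using m
      by (auto intro!: derivative_eq_intros simp: power2_eq_square algebra_simps numeral_2_eq_2)
    then show ?thesis unfolding N2_def N1_def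
      by (auto intro!: DERIV_sum)
  qed
  have dpsi: "(\<psi> has_real_derivative \<psi>1 t) (at t)" for t
    unfolding \<psi>_def \<psi>1_def
    using pos[of t] d1[of t]
    by (auto intro!: derivative_eq_intros simp: algebra_simps)
  have dpsi1: "(\<psi>1 has_real_derivative \<psi>2 t) (at t)" for t
    unfolding \<psi>1_def \<psi>2_def
    using pos[of t] d1[of t] d2[of t]
    by (auto intro!: derivative_eq_intros simp: algebra_simps)
  define diff where "diff i = (if i = 0 then \<psi> else if i = 1 then \<psi>1 else \<psi>2)" for i :: nat
  have "\<exists>t. 0 < t \<and> t < 1 \<and> \<psi> 1 = (\<Sum>i<2. diff i 0 / fact i * (1 - 0) ^ i) + diff 2 t / fact 2 * (1 - 0) ^ 2"
    by (rule Taylor_up[where a=0]) (auto simp: diff_def dpsi dpsi1 less_2_cases_iff)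
  then obtain t where t: "\<psi> 1 = \<psi> 0 + \<psi>1 0 + \<psi>2 t / 2"
    by (auto simp: diff_def numeral_2_eq_2 lessThan_Suc)
  have e0: "\<psi> 0 = gg m x" unfolding \<psi>_def Nf_def gg_def r_def z_def by simp
  have e1: "\<psi> 1 = gg m (\<lambda>s. x s + h s)" unfolding \<psi>_def Nf_def gg_def r_def z_def by simp
  have e2: "\<psi>1 0 = DD m x h"
    unfolding \<psi>1_def DD_def Nf_def N1_def r_def z_def using m
    by (simp add: sum_distrib_left algebra_simps)
  have holder: "(\<Sum>s\<in>UNIV. z t s ^ (2*m-2) * (h s)\<^sup>2) \<le> Nf t powr ((real m - 1)/real m) * NN m h powr (1/real m)"
  proof -
    have "(\<Sum>s\<in>UNIV. z t s ^ (2*m-2) * (h s)\<^sup>2) = (\<Sum>s\<in>UNIV. (z t s ^ (2*m)) powr ((real m - 1)/real m) * (h s ^ (2*m)) powr (1/real m))"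
      using pow_powr_aux[OF m] by simp
    also have "\<dots> \<le> (\<Sum>s\<in>UNIV. z t s ^ (2*m)) powr ((real m - 1)/real m) * (\<Sum>s\<in>UNIV. h s ^ (2*m)) powr (1/real m)"
      using m by (intro holder_sum) (auto simp: zero_le_even_power field_simps)
    finally show ?thesis unfolding Nf_def NN_def .
  qed
  have "\<psi>2 t \<le> r * (Nf t powr (r - 1) * N2 t)"
  proof -
    have "(r - 1) * Nf t powr (r - 2) * N1 t * N1 t \<le> 0"
    proof -
      have "r - 1 \<le> 0" using m by (simp add: r_def)
      moreover have "Nf t powr (r - 2) * (N1 t * N1 t) \<ge> 0" by simp
      ultimately show ?thesis by (metis mult.assoc mult_nonpos_nonneg)
    qed
    moreover have "r \<ge> 0" by (simp add: r_def)
    ultimately show ?thesis unfolding \<psi>2_def by (simp add: mult_left_mono_neg mult_left_mono)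
  qed
  also have "\<dots> = r * real (2*m) * real (2*m-1) * (Nf t powr (r - 1) * (\<Sum>s\<in>UNIV. z t s ^ (2*m-2) * (h s)\<^sup>2))"
    unfolding N2_def by (simp add: sum_distrib_left algebra_simps)
  also have "\<dots> \<le> r * real (2*m) * real (2*m-1) * (Nf t powr (r - 1) * (Nf t powr ((real m - 1)/real m) * NN m h powr (1/real m)))"
    using holder by (intro mult_left_mono) (auto simp: r_def)
  also have "\<dots> = 2 * (2 * real m - 1) * gg m h"
  proof -
    have "Nf t powr (r - 1) * Nf t powr ((real m - 1)/real m) = 1"
      using pos[of t] m by (simp add: r_def powr_add[symmetric] field_simps)
    then show ?thesis using m unfolding gg_def r_def
      by (simp add: of_nat_diff algebra_simps)
  qed
  finally have "\<psi>2 t \<le> 2 * (2 * real m - 1) * gg m h" .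
  then show ?thesis using t e0 e1 e2 by linarith
qed

lemma smooth:
  fixes x h :: "'s::finite \<Rightarrow> real"
  assumes m: "m \<ge> 2"
  shows "gg m (\<lambda>s. x s + h s) \<le> gg m x + DD m x h + (2 * real m - 1) * gg m h"
proof (cases "\<forall>t. NN m (\<lambda>s. x s + t * h s) > 0")
  case True then show ?thesis using smooth_main[OF m] by blast
next
  case False
  then obtain t where "NN m (\<lambda>s. x s + t * h s) = 0" using NN_nonneg
    by (metis less_eq_real_def)
  then have xt: "(\<lambda>s. x s + t * h s) = (\<lambda>_. 0)" using NN_zero_iff[of m] m by auto
  have G: "gg m x \<ge> 0" "gg m h \<ge> 0" by (auto simp: gg_nonneg)
  show ?thesis
  proof (cases "t = 0")
    case True
    then have x0: "x = (\<lambda>_. 0)" using xt by (auto simp: fun_eq_iff)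
    have "DD m x h = 0" "gg m x = 0" using m by (auto simp: x0 DD_def gg_def NN_def power_0_left)
    have "1 * gg m h \<le> (2*real m - 1) * gg m h" by (intro mult_right_mono) (use m G in auto)
    moreover have "(\<lambda>s. x s + h s) = h" using x0 by auto
    ultimately show ?thesis using \<open>DD m x h = 0\<close> \<open>gg m x = 0\<close> by simp
  next
    case False
    define u where "u = - 1 / t"
    have hu: "h = (\<lambda>s. u * x s)" using xt False
      by (auto simp: fun_eq_iff u_def field_simps) (metis add.commute add_eq_0_iff mult.commute)
    have a: "gg m (\<lambda>s. x s + h s) = (1 + u)\<^sup>2 * gg m x"
      using gg_scale[of m "1+u" x] m by (simp add: hu algebra_simps)
    have b: "DD m x h = 2 * u * gg m x" using DD_lin[of m x u x] DD_self[of m x] m by (simp add: hu)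
    have c: "gg m h = u\<^sup>2 * gg m x" using gg_scale[of m u x] m by (simp add: hu)
    have "(1 + u)\<^sup>2 * gg m x \<le> gg m x + 2 * u * gg m x + (2 * real m - 1) * (u\<^sup>2 * gg m x)"
    proof -
      have "u\<^sup>2 * gg m x \<le> (2 * real m - 1) * (u\<^sup>2 * gg m x)"
      proof -
        have "1 * (u\<^sup>2 * gg m x) \<le> (2 * real m - 1) * (u\<^sup>2 * gg m x)"
          by (intro mult_right_mono) (use m G in auto)
        then show ?thesis by simp
      qed
      then show ?thesis by (simp add: power2_eq_square algebra_simps)
    qed
    then show ?thesis using a b c by simp
  qed
qed

lemma DD_bound:
  fixes x y :: "'s::finite \<Rightarrow> real"
  assumes m: "m \<ge> 1"
  shows "DD m x y \<le> 2 * NN m x powr (1/(2*real m)) * NN m y powr (1/(2*real m))"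
proof (cases "NN m x = 0")
  case True then show ?thesis by (simp add: DD_def)
next
  case False
  then have pos: "NN m x > 0" using NN_nonneg[of m x] by linarith
  have "(\<Sum>s\<in>UNIV. x s ^ (2*m-1) * y s) \<le> (\<Sum>s\<in>UNIV. \<bar>x s\<bar> ^ (2*m-1) * \<bar>y s\<bar>)"
    by (intro sum_mono) (metis abs_ge_self abs_mult power_abs)
  also have "\<dots> = (\<Sum>s\<in>UNIV. (x s ^ (2*m)) powr ((2*real m - 1)/(2*real m)) * (y s ^ (2*m)) powr (1/(2*real m)))"
  proof (intro sum.cong refl)
    fix s
    have eq1: "(z ^ (2*m)) powr ((2*real m - 1)/(2*real m)) = \<bar>z\<bar> ^ (2*m-1)" for z :: real
    proof (cases "z = 0")
      case True then show ?thesis using m by (simp add: power_0_left)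
    next
      case False
      have "z ^ (2*m) = \<bar>z\<bar> ^ (2*m)" by (simp add: power_even_abs)
      then have "(z ^ (2*m)) powr ((2*real m - 1)/(2*real m)) = \<bar>z\<bar> powr (real (2*m) * ((2*real m - 1)/(2*real m)))"
        using False by (simp add: powr_realpow[symmetric] powr_powr)
      also have "\<dots> = \<bar>z\<bar> powr (real (2*m-1))" using m by (simp add: of_nat_diff)
      also have "\<dots> = \<bar>z\<bar> ^ (2*m-1)" using False by (simp add: powr_realpow)
      finally show ?thesis .
    qed
    have eq2: "(z ^ (2*m)) powr (1/(2*real m)) = \<bar>z\<bar>" for z :: real
    proof (cases "z = 0")
      case True then show ?thesis using m by simp
    next
      case False
      have "z ^ (2*m) = \<bar>z\<bar> ^ (2*m)" by (simp add: power_even_abs)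
      then have "(z ^ (2*m)) powr (1/(2*real m)) = \<bar>z\<bar> powr (real (2*m) * (1/(2*real m)))"
        using False by (simp add: powr_realpow[symmetric] powr_powr)
      also have "\<dots> = \<bar>z\<bar>" using m False by simp
      finally show ?thesis .
    qed
    show "\<bar>x s\<bar> ^ (2*m-1) * \<bar>y s\<bar> = (x s ^ (2*m)) powr ((2*real m - 1)/(2*real m)) * (y s ^ (2*m)) powr (1/(2*real m))"
      by (simp add: eq1 eq2)
  qed
  also have "\<dots> \<le> NN m x powr ((2*real m - 1)/(2*real m)) * NN m y powr (1/(2*real m))"
    unfolding NN_def using m by (intro holder_sum) (auto simp: zero_le_even_power field_simps)
  finally have hs: "(\<Sum>s\<in>UNIV. x s ^ (2*m-1) * y s) \<le> NN m x powr ((2*real m - 1)/(2*real m)) * NN m y powr (1/(2*real m))" .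
  have "DD m x y \<le> 2 * NN m x powr (1/real m - 1) * (NN m x powr ((2*real m - 1)/(2*real m)) * NN m y powr (1/(2*real m)))"
    unfolding DD_def using hs by (intro mult_left_mono) auto
  also have "\<dots> = 2 * NN m x powr (1/(2*real m)) * NN m y powr (1/(2*real m))"
  proof -
    have "NN m x powr (1/real m - 1) * NN m x powr ((2*real m - 1)/(2*real m)) = NN m x powr (1/(2*real m))"
      using pos m by (simp add: powr_add[symmetric] field_simps)
    then show ?thesis by (simp add: algebra_simps)
  qed
  finally show ?thesis .
qed

lemma sup_norm_ge: "\<bar>x s\<bar> \<le> sup_norm x"
  unfolding sup_norm_def by (rule Max_ge) auto

lemma sup_norm_nonneg: "sup_norm x \<ge> 0"
  using sup_norm_ge[of x undefined] by linarith

lemma sup_norm_le: "(\<And>s. \<bar>x s\<bar> \<le> c) \<Longrightarrow> sup_norm x \<le> c"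
  unfolding sup_norm_def by (subst Max_le_iff) auto

lemma sup_norm_attained: "\<exists>s. \<bar>x s\<bar> = sup_norm (x::'s::finite \<Rightarrow> real)"
proof -
  have "sup_norm x \<in> range (\<lambda>s. \<bar>x s\<bar>)" unfolding sup_norm_def by (rule Max_in) auto
  then show ?thesis by auto
qed

lemma gg_sq: "gg m x = (NN m x powr (1/(2*real m)))\<^sup>2"
proof -
  have "(NN m x powr (1/(2*real m)))\<^sup>2 = NN m x powr (1/(2*real m)) * NN m x powr (1/(2*real m))"
    by (simp add: power2_eq_square)
  also have "\<dots> = NN m x powr (1/(2*real m) + 1/(2*real m))" by (rule powr_add[symmetric])
  also have "1/(2*real m) + 1/(2*real m) = 1/real m" by simp
  finally show ?thesis unfolding gg_def by simp
qed

lemma NN_root_bounds: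
  fixes x :: "'s::finite \<Rightarrow> real"
  assumes m: "m \<ge> 1"
  shows "sup_norm x \<le> NN m x powr (1/(2*real m))"
    and "NN m x powr (1/(2*real m)) \<le> real CARD('s) powr (1/(2*real m)) * sup_norm x"
proof -
  define S where "S = sup_norm x"
  have S0: "S \<ge> 0" by (simp add: S_def sup_norm_nonneg)
  have rt: "(S ^ (2*m)) powr (1/(2*real m)) = S"
  proof (cases "S = 0")
    case True then show ?thesis using m by simp
  next
    case False
    then have Sp: "S > 0" using S0 by simp
    have "S ^ (2*m) = S powr (real (2*m))" using Sp by (rule powr_realpow[symmetric])
    then have "(S ^ (2*m)) powr (1/(2*real m)) = S powr (real (2*m) * (1/(2*real m)))"
      by (simp add: powr_powr)
    also have "real (2*m) * (1/(2*real m)) = 1" using m by simp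
    finally show ?thesis using Sp by simp
  qed
  obtain s0 where s0: "\<bar>x s0\<bar> = S" using sup_norm_attained S_def by metis
  have "S ^ (2*m) \<le> NN m x"
  proof -
    have "S ^ (2*m) = \<bar>x s0\<bar> ^ (2*m)" using s0 by simp
    also have "\<dots> = x s0 ^ (2*m)" by (rule power_even_abs) simp
    also have "\<dots> \<le> NN m x" unfolding NN_def
      by (rule member_le_sum) (auto simp: zero_le_even_power)
    finally show ?thesis .
  qed
  then have "(S ^ (2*m)) powr (1/(2*real m)) \<le> NN m x powr (1/(2*real m))"
    using S0 by (intro powr_mono2) auto
  then show "sup_norm x \<le> NN m x powr (1/(2*real m))" using rt S_def by simp
  have "NN m x \<le> (\<Sum>s\<in>(UNIV::'s set). S ^ (2*m))" unfolding NN_def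
  proof (intro sum_mono)
    fix s
    have "x s ^ (2*m) = \<bar>x s\<bar> ^ (2*m)" by (simp add: power_even_abs)
    also have "\<dots> \<le> S ^ (2*m)" using sup_norm_ge[of x s] by (intro power_mono) (auto simp: S_def)
    finally show "x s ^ (2*m) \<le> S ^ (2*m)" .
  qed
  also have "\<dots> = real CARD('s) * S ^ (2*m)" by simp
  finally have "NN m x powr (1/(2*real m)) \<le> (real CARD('s) * S ^ (2*m)) powr (1/(2*real m))"
    using NN_nonneg by (intro powr_mono2) auto
  also have "\<dots> = real CARD('s) powr (1/(2*real m)) * S" using S0 by (simp add: powr_mult rt)
  finally show "NN m x powr (1/(2*real m)) \<le> real CARD('s) powr (1/(2*real m)) * sup_norm x"
    by (simp add: S_def)
qed

lemma gg_bounds: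
  fixes x :: "'s::finite \<Rightarrow> real"
  assumes m: "m \<ge> 1"
  shows "(sup_norm x)\<^sup>2 \<le> gg m x"
    and "gg m x \<le> real CARD('s) powr (1/real m) * (sup_norm x)\<^sup>2"
proof -
  note b = NN_root_bounds[OF m, of x]
  show "(sup_norm x)\<^sup>2 \<le> gg m x" unfolding gg_sq using b(1) sup_norm_nonneg
    by (intro power_mono) auto
  have "gg m x \<le> (real CARD('s) powr (1/(2*real m)) * sup_norm x)\<^sup>2" unfolding gg_sq using b(2)
    by (intro power_mono) auto
  also have "\<dots> = real CARD('s) powr (1/real m) * (sup_norm x)\<^sup>2"
    by (simp add: power_mult_distrib power2_eq_square powr_add[symmetric])
  finally show "gg m x \<le> real CARD('s) powr (1/real m) * (sup_norm x)\<^sup>2" .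
qed

lemma seq_step_aux:
  fixes m C Kb :: real
  assumes m: "m \<ge> 2" and C: "C \<ge> 3 * Kb" and Kb: "Kb \<ge> 0"
  shows "(1 - 7/(4*m)) * (C/m) + 9*Kb/(4*m\<^sup>2) \<le> C/(m+1)"
proof -
  have mp: "m > 0" using m by simp
  have C0: "C \<ge> 0" using C Kb by simp
  have "(1 - 7/(4*m)) * (C/m) + 9*Kb/(4*m\<^sup>2) = (C*(4*m - 7) + 9*Kb) / (4*m\<^sup>2)"
    using mp by (simp add: field_simps power2_eq_square)
  also have "\<dots> \<le> C/(m+1)"
  proof -
    have "(C*(4*m - 7) + 9*Kb) * (m+1) \<le> C * (4*m\<^sup>2)"
    proof -
      have "9*Kb*(m+1) \<le> 3*C*(m+1)" using C mp by (intro mult_right_mono) auto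
      also have "\<dots> \<le> C*(3*m+7)" using C0 by (simp add: algebra_simps)
      finally have "9*Kb*(m+1) \<le> C*(3*m+7)" .
      then show ?thesis by (simp add: algebra_simps power2_eq_square)
    qed
    then show ?thesis using mp by (simp add: field_simps)
  qed
  finally show ?thesis .
qed

lemma seq_bound:
  fixes a :: "nat \<Rightarrow> real" and K C b :: real
  assumes K: "K \<ge> 2" and b: "b \<ge> 0" and a0: "\<And>k. a k \<ge> 0" and C: "C \<ge> 3 * K * b"
    and base: "a 0 \<le> C / K"
    and step: "\<And>k. a (Suc k) \<le> (1 - 7/(4*(real k + K))) * a k + 9*K*b/(4*(real k + K)\<^sup>2)"
  shows "a k \<le> C / (real k + K)"
proof (induction k)
  case 0 then show ?case using base by simp
next
  case (Suc k)
  define m where "m = real k + K"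
  have m2: "m \<ge> 2" using K by (simp add: m_def)
  have c: "1 - 7/(4*m) \<ge> 0" using m2 by (simp add: field_simps)
  have "a (Suc k) \<le> (1 - 7/(4*m)) * a k + 9*K*b/(4*m\<^sup>2)" using step[of k] by (simp add: m_def)
  also have "\<dots> \<le> (1 - 7/(4*m)) * (C/m) + 9*(K*b)/(4*m\<^sup>2)"
  proof -
    have "(1 - 7/(4*m)) * a k \<le> (1 - 7/(4*m)) * (C/m)" using Suc.IH c by (intro mult_left_mono) (auto simp: m_def)
    then show ?thesis by (simp add: mult.assoc)
  qed
  also have "\<dots> \<le> C/(m+1)" using seq_step_aux[OF m2, where C=C and Kb="K*b"] C K b by (simp add: mult.assoc)
  finally show ?case by (simp add: m_def add.commute add.left_commute)
qed

lemma exp_fin_type: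
  fixes p :: "'x::finite pmf"
  shows "measure_pmf.expectation p f = (\<Sum>x\<in>UNIV. pmf p x * f x)"
  by (subst integral_measure_pmf_real[of UNIV]) (auto simp: mult.commute)

lemma exp_bind_fin:
  fixes h :: "'b \<Rightarrow> real"
  assumes "finite (set_pmf p)" "\<And>x. x \<in> set_pmf p \<Longrightarrow> finite (set_pmf (f x))"
  shows "measure_pmf.expectation (p \<bind> f) h = measure_pmf.expectation p (\<lambda>x. measure_pmf.expectation (f x) h)"
proof -
  have "measure_pmf.expectation (p \<bind> f) h = (\<Sum>a\<in>set_pmf p. pmf p a *\<^sub>R measure_pmf.expectation (f a) h)"
    using assms by (intro pmf_expectation_bind) auto
  also have "\<dots> = measure_pmf.expectation p (\<lambda>x. measure_pmf.expectation (f x) h)"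
    using assms by (subst integral_measure_pmf[of "set_pmf p"]) auto
  finally show ?thesis .
qed

lemma traj_finite:
  fixes P :: "'a::finite \<Rightarrow> 's::finite \<Rightarrow> 's pmf"
  shows "finite (set_pmf (traj P \<pi>' n s))"
proof (induction n arbitrary: s)
  case 0 then show ?case by simp
next
  case (Suc n)
  have f1: "finite (set_pmf (\<pi>' s))" by simp
  show ?case
    by (auto simp: Suc.IH split: prod.splits intro!: finite_UN_I)
qed

lemma traj_state0: "\<tau> \<in> set_pmf (traj P \<pi>' n s) \<Longrightarrow> traj_state \<tau> 0 = s"
  by (cases n) (auto simp: traj_state_def split: prod.splits)

lemma exp_traj_Suc:
  fixes P :: "'a::finite \<Rightarrow> 's::finite \<Rightarrow> 's pmf" and h :: "('s \<times> 'a) list \<times> 's \<Rightarrow> real"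
  shows "measure_pmf.expectation (traj P \<pi>' (Suc n) s) h =
    (\<Sum>a\<in>UNIV. pmf (\<pi>' s) a * (\<Sum>s'\<in>UNIV. pmf (P a s) s' *
        measure_pmf.expectation (traj P \<pi>' n s') (\<lambda>\<tau>. h ((s,a) # fst \<tau>, snd \<tau>))))"
proof -
  have inner: "measure_pmf.expectation (traj P \<pi>' n s' \<bind> (\<lambda>(tr, sf). return_pmf ((s, a) # tr, sf))) h
      = measure_pmf.expectation (traj P \<pi>' n s') (\<lambda>\<tau>. h ((s,a) # fst \<tau>, snd \<tau>))" for a s'
  proof -
    have "measure_pmf.expectation (traj P \<pi>' n s' \<bind> (\<lambda>(tr, sf). return_pmf ((s, a) # tr, sf))) h
      = measure_pmf.expectation (traj P \<pi>' n s') (\<lambda>x. measure_pmf.expectation ((\<lambda>(tr, sf). return_pmf ((s, a) # tr, sf)) x) h)"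
      by (rule exp_bind_fin) (auto simp: traj_finite split: prod.splits)
    also have "\<dots> = measure_pmf.expectation (traj P \<pi>' n s') (\<lambda>\<tau>. h ((s,a) # fst \<tau>, snd \<tau>))"
      by (simp add: case_prod_beta)
    finally show ?thesis .
  qed
  have mid: "measure_pmf.expectation (P a s \<bind> (\<lambda>s'. traj P \<pi>' n s' \<bind> (\<lambda>(tr, sf). return_pmf ((s, a) # tr, sf)))) h
     = (\<Sum>s'\<in>UNIV. pmf (P a s) s' * measure_pmf.expectation (traj P \<pi>' n s') (\<lambda>\<tau>. h ((s,a) # fst \<tau>, snd \<tau>)))" for a
    by (subst exp_bind_fin) (auto simp: traj_finite split: prod.splits intro!: finite_UN_I simp: inner exp_fin_type)
  show ?thesis
    by (simp only: traj.simps, subst exp_bind_fin)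
       (auto simp: traj_finite split: prod.splits intro!: finite_UN_I simp: mid exp_fin_type)
qed

lemma exp_affine_supp:
  fixes p :: "'x pmf" and f g :: "'x \<Rightarrow> real"
  assumes fin: "finite (set_pmf p)" and eq: "\<And>x. x \<in> set_pmf p \<Longrightarrow> f x = c + d * g x"
  shows "measure_pmf.expectation p f = c + d * measure_pmf.expectation p g"
proof -
  have "measure_pmf.expectation p f = measure_pmf.expectation p (\<lambda>x. c + d * g x)"
    using eq by (intro integral_cong_AE) (auto simp: AE_measure_pmf_iff)
  also have "\<dots> = c + d * measure_pmf.expectation p g"
  proof -
    have i: "integrable (measure_pmf p) g" using fin by (rule integrable_measure_pmf_finite)
    then show ?thesis by simp
  qed
  finally show ?thesis .
qed

lemma traj_state_Cons0 [simp]: "traj_state ((s,a)#tr, sf) 0 = s"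
  by (simp add: traj_state_def)
lemma traj_state_Cons_Suc [simp]: "traj_state ((s,a)#tr, sf) (Suc t) = traj_state (tr, sf) t"
  by (simp add: traj_state_def)
lemma traj_action_Cons0 [simp]: "traj_action ((s,a)#tr, sf) 0 = a"
  by (simp add: traj_action_def)
lemma traj_action_Cons_Suc [simp]: "traj_action ((s,a)#tr, sf) (Suc t) = traj_action (tr, sf) t"
  by (simp add: traj_action_def)

locale vt =
  fixes P :: "'a::finite \<Rightarrow> 's::finite \<Rightarrow> 's pmf"
    and R :: "'s \<Rightarrow> 'a \<Rightarrow> real"
    and \<pi> \<pi>' :: "'s \<Rightarrow> 'a pmf"
    and \<beta> cbar \<rho>bar :: real
  assumes R_range: "\<And>s a. 0 \<le> R s a \<and> R s a \<le> 1"
    and beta: "0 < \<beta>" "\<beta> < 1"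
    and supp: "\<And>s a. pmf (\<pi> s) a > 0 \<Longrightarrow> pmf (\<pi>' s) a > 0"
    and trunc: "\<rho>bar \<ge> cbar" "cbar > 0"
begin

definition cc where "cc s a = min cbar (is_ratio \<pi> \<pi>' s a)"
definition rr where "rr s a = min \<rho>bar (is_ratio \<pi> \<pi>' s a)"

abbreviation incr where "incr n V \<tau> \<equiv> vtrace_incr R \<beta> \<pi> \<pi>' cbar \<rho>bar n V \<tau>"
definition Eincr where "Eincr n V s = measure_pmf.expectation (traj P \<pi>' n s) (incr n V)"

lemma ratio_nonneg: "is_ratio \<pi> \<pi>' s a \<ge> 0"
  by (simp add: is_ratio_def)

lemma cc_nonneg: "cc s a \<ge> 0" and cc_le: "cc s a \<le> cbar" and rr_le: "rr s a \<le> \<rho>bar"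
  and cc_rr: "cc s a \<le> rr s a" and rr_nonneg: "rr s a \<ge> 0"
  using ratio_nonneg[of s a] trunc by (auto simp: cc_def rr_def)

lemma pi'_min: "pmf (\<pi>' s) a * min c (is_ratio \<pi> \<pi>' s a) = min (c * pmf (\<pi>' s) a) (pmf (\<pi> s) a)"
  if "c \<ge> 0" for c
proof (cases "pmf (\<pi>' s) a = 0")
  case True
  have "\<not> pmf (\<pi> s) a > 0" using True supp[of s a] by auto
  then have "pmf (\<pi> s) a = 0" using pmf_nonneg[of "\<pi> s" a] by linarith
  then show ?thesis using True by simp
next
  case False
  then have pos: "pmf (\<pi>' s) a > 0" using pmf_nonneg[of "\<pi>' s" a] by linarith
  have "pmf (\<pi>' s) a * min c (pmf (\<pi> s) a / pmf (\<pi>' s) a) = min (pmf (\<pi>' s) a * c) (pmf (\<pi>' s) a * (pmf (\<pi> s) a / pmf (\<pi>' s) a))"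
    using pos by (simp add: min_mult_distrib_left)
  then show ?thesis using pos by (simp add: is_ratio_def mult.commute)
qed

lemma pi'_rr: "pmf (\<pi>' s) a * rr s a = min (\<rho>bar * pmf (\<pi>' s) a) (pmf (\<pi> s) a)"
  unfolding rr_def using trunc by (intro pi'_min) auto

lemma pi'_cc: "pmf (\<pi>' s) a * cc s a = min (cbar * pmf (\<pi>' s) a) (pmf (\<pi> s) a)"
  unfolding cc_def using trunc by (intro pi'_min) auto

lemma sum_pmf_UNIV: "(\<Sum>x\<in>UNIV. pmf (p :: 'x::finite pmf) x) = 1"
  by (rule sum_pmf_eq_1) auto

lemma Erho_le1: "(\<Sum>a\<in>UNIV. pmf (\<pi>' s) a * rr s a) \<le> 1"
proof -
  have "(\<Sum>a\<in>UNIV. pmf (\<pi>' s) a * rr s a) \<le> (\<Sum>a\<in>UNIV. pmf (\<pi> s) a)"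
    by (intro sum_mono) (simp add: pi'_rr)
  then show ?thesis by (simp add: sum_pmf_UNIV)
qed

lemma Ec_le1: "(\<Sum>a\<in>UNIV. pmf (\<pi>' s) a * cc s a) \<le> 1"
proof -
  have "(\<Sum>a\<in>UNIV. pmf (\<pi>' s) a * cc s a) \<le> (\<Sum>a\<in>UNIV. pmf (\<pi> s) a)"
    by (intro sum_mono) (simp add: pi'_cc)
  then show ?thesis by (simp add: sum_pmf_UNIV)
qed

lemma incr_Suc:
  "incr (Suc n) V ((s,a)#tr, sf) = rr s a * (R s a + \<beta> * V (traj_state (tr,sf) 0) - V s)
      + \<beta> * cc s a * incr n V (tr, sf)"
proof -
  define \<tau> where "\<tau> = ((s,a)#tr, sf)"
  define f where "f t = \<beta> ^ t
        * (\<Prod>j<t. min cbar (is_ratio \<pi> \<pi>' (traj_state \<tau> j) (traj_action \<tau> j)))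
        * min \<rho>bar (is_ratio \<pi> \<pi>' (traj_state \<tau> t) (traj_action \<tau> t))
        * (R (traj_state \<tau> t) (traj_action \<tau> t) + \<beta> * V (traj_state \<tau> (Suc t)) - V (traj_state \<tau> t))" for t
  define g where "g t = \<beta> ^ t
        * (\<Prod>j<t. min cbar (is_ratio \<pi> \<pi>' (traj_state (tr,sf) j) (traj_action (tr,sf) j)))
        * min \<rho>bar (is_ratio \<pi> \<pi>' (traj_state (tr,sf) t) (traj_action (tr,sf) t))
        * (R (traj_state (tr,sf) t) (traj_action (tr,sf) t) + \<beta> * V (traj_state (tr,sf) (Suc t)) - V (traj_state (tr,sf) t))" for t
  have f0: "f 0 = rr s a * (R s a + \<beta> * V (traj_state (tr,sf) 0) - V s)"
    by (simp add: f_def \<tau>_def rr_def)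
  have fS: "f (Suc t) = \<beta> * cc s a * g t" for t
  proof -
    have "(\<Prod>j<Suc t. min cbar (is_ratio \<pi> \<pi>' (traj_state \<tau> j) (traj_action \<tau> j)))
        = cc s a * (\<Prod>j<t. min cbar (is_ratio \<pi> \<pi>' (traj_state (tr,sf) j) (traj_action (tr,sf) j)))"
      by (subst prod.lessThan_Suc_shift) (simp add: \<tau>_def cc_def)
    then show ?thesis by (simp add: f_def g_def \<tau>_def)
  qed
  have "incr (Suc n) V \<tau> = (\<Sum>t<Suc n. f t)" unfolding vtrace_incr_def f_def ..
  also have "\<dots> = f 0 + (\<Sum>t<n. f (Suc t))" by (rule sum.lessThan_Suc_shift)
  also have "\<dots> = f 0 + \<beta> * cc s a * (\<Sum>t<n. g t)" by (simp add: fS sum_distrib_left)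
  also have "(\<Sum>t<n. g t) = incr n V (tr, sf)" unfolding vtrace_incr_def g_def ..
  finally show ?thesis using f0 by (simp add: \<tau>_def)
qed

lemma Eincr_Suc:
  "Eincr (Suc n) V s = (\<Sum>a\<in>UNIV. pmf (\<pi>' s) a * (\<Sum>s'\<in>UNIV. pmf (P a s) s' *
      (rr s a * (R s a + \<beta> * V s' - V s) + \<beta> * cc s a * Eincr n V s')))"
  unfolding Eincr_def exp_traj_Suc
proof (intro sum.cong refl arg_cong2[where f="(*)"])
  fix a s'
  show "measure_pmf.expectation (traj P \<pi>' n s') (\<lambda>\<tau>. incr (Suc n) V ((s, a) # fst \<tau>, snd \<tau>)) =
        rr s a * (R s a + \<beta> * V s' - V s) + \<beta> * cc s a * measure_pmf.expectation (traj P \<pi>' n s') (incr n V)"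
    by (intro exp_affine_supp traj_finite) (auto simp: incr_Suc traj_state0)
qed

end

context vt begin

definition Er where "Er s = (\<Sum>a\<in>UNIV. pmf (\<pi>' s) a * rr s a)"
definition Ec where "Ec s = (\<Sum>a\<in>UNIV. pmf (\<pi>' s) a * cc s a)"
abbreviation "kr \<equiv> kappa_rho \<pi> \<pi>' \<rho>bar"
abbreviation "kc \<equiv> kappa_c \<pi> \<pi>' cbar"
definition gn where "gn k = 1 - (1-\<beta>) * kr * (\<Sum>t<k. (\<beta>*kc)^t)"

lemma Er_exp: "measure_pmf.expectation (\<pi>' s) (\<lambda>a. min \<rho>bar (is_ratio \<pi> \<pi>' s a)) = Er s"
  by (simp add: exp_fin_type Er_def rr_def)
lemma Ec_exp: "measure_pmf.expectation (\<pi>' s) (\<lambda>a. min cbar (is_ratio \<pi> \<pi>' s a)) = Ec s"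
  by (simp add: exp_fin_type Ec_def cc_def)

lemma kr_le: "kr \<le> Er s"
  unfolding kappa_rho_def Er_exp[symmetric] by (rule Min_le) auto
lemma kc_le: "kc \<le> Ec s"
  unfolding kappa_c_def Ec_exp[symmetric] by (rule Min_le) auto

lemma Er_pos: "Er s > 0"
proof -
  have "\<exists>a. pmf (\<pi> s) a > 0"
  proof (rule ccontr)
    assume "\<not> ?thesis"
    then have "\<forall>a. pmf (\<pi> s) a = 0" using pmf_nonneg by (metis less_eq_real_def)
    then show False using sum_pmf_UNIV[of "\<pi> s"] by simp
  qed
  then obtain a where a: "pmf (\<pi> s) a > 0" by blast
  have "0 < pmf (\<pi>' s) a * rr s a" unfolding pi'_rr using a supp[OF a] trunc by auto
  also have "\<dots> \<le> Er s" unfolding Er_def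
    by (rule member_le_sum) (auto simp: rr_nonneg)
  finally show ?thesis .
qed

lemma Ec_nonneg: "Ec s \<ge> 0" unfolding Ec_def by (intro sum_nonneg) (simp add: cc_nonneg)

lemma kr_pos: "kr > 0"
  unfolding kappa_rho_def Er_exp by (subst Min_gr_iff) (auto simp: Er_pos)
lemma kc_nonneg: "kc \<ge> 0"
  unfolding kappa_c_def Ec_exp by (subst Min_ge_iff) (auto simp: Ec_nonneg)
lemma kc_le1: "kc \<le> 1" using kc_le[of undefined] Ec_le1[of undefined] unfolding Ec_def by linarith
lemma kr_le1: "kr \<le> 1" using kr_le[of undefined] Erho_le1[of undefined] unfolding Er_def by linarith
lemma Ec_le_Er: "Ec s \<le> Er s" unfolding Ec_def Er_def
  by (intro sum_mono mult_left_mono) (auto simp: cc_rr)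

lemma Eincr_0: "Eincr 0 V s = 0"
  by (simp add: Eincr_def vtrace_incr_def)

lemma gn_Suc: "gn (Suc k) = 1 - (1-\<beta>) * kr - \<beta> * kc * (1 - gn k)"
proof -
  have "(\<Sum>t<Suc k. (\<beta>*kc)^t) = 1 + (\<beta>*kc) * (\<Sum>t<k. (\<beta>*kc)^t)"
    by (subst sum.lessThan_Suc_shift) (simp add: sum_distrib_left del: sum.lessThan_Suc)
  then show ?thesis unfolding gn_def by (simp add: algebra_simps)
qed

lemma gn_le1: "1 - gn k \<ge> 0"
  unfolding gn_def using beta kr_pos kc_nonneg by (auto intro!: mult_nonneg_nonneg sum_nonneg)

lemma step_eq:
  fixes X Y Z :: "'s \<Rightarrow> real" and p :: "'s pmf"
  assumes "\<And>s'. X s' - Y s' = Z s' - c"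
  shows "(\<Sum>s'\<in>UNIV. pmf p s' * X s') - (\<Sum>s'\<in>UNIV. pmf p s' * Y s') = (\<Sum>s'\<in>UNIV. pmf p s' * Z s') - c"
proof -
  have "c = (\<Sum>s'\<in>UNIV. pmf p s' * c)" by (simp add: sum_distrib_right[symmetric] sum_pmf_UNIV)
  then have "(\<Sum>s'\<in>UNIV. pmf p s' * Z s') - c = (\<Sum>s'\<in>UNIV. pmf p s' * (Z s' - c))"
    by (simp add: sum_subtractf right_diff_distrib)
  also have "\<dots> = (\<Sum>s'\<in>UNIV. pmf p s' * (X s' - Y s'))" using assms by simp
  also have "\<dots> = (\<Sum>s'\<in>UNIV. pmf p s' * X s') - (\<Sum>s'\<in>UNIV. pmf p s' * Y s')"
    by (simp add: sum_subtractf right_diff_distrib)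
  finally show ?thesis by simp
qed

lemma contraction:
  "\<bar>(V s - W s) + (Eincr k V s - Eincr k W s)\<bar> \<le> gn k * sup_norm (\<lambda>s. V s - W s)"
proof (induction k arbitrary: s)
  case 0
  then show ?case using sup_norm_ge[of "\<lambda>s. V s - W s" s] by (simp add: Eincr_0 gn_def)
next
  case (Suc k)
  define d where "d = sup_norm (\<lambda>s. V s - W s)"
  define D where "D s' = V s' - W s'" for s'
  define F where "F s' = D s' + (Eincr k V s' - Eincr k W s')" for s'
  have d0: "d \<ge> 0" by (simp add: d_def sup_norm_nonneg)
  have Dd: "\<bar>D s'\<bar> \<le> d" for s' unfolding D_def d_def by (rule sup_norm_ge)
  have Fd: "\<bar>F s'\<bar> \<le> gn k * d" for s' using Suc.IH unfolding F_def D_def d_def .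
  define Z where "Z a s' = \<beta> * (rr s a - cc s a) * D s' + \<beta> * cc s a * F s'" for a s'
  have per_a: "(\<Sum>s'\<in>UNIV. pmf (P a s) s' * (rr s a * (R s a + \<beta> * V s' - V s) + \<beta> * cc s a * Eincr k V s'))
      - (\<Sum>s'\<in>UNIV. pmf (P a s) s' * (rr s a * (R s a + \<beta> * W s' - W s) + \<beta> * cc s a * Eincr k W s'))
      = (\<Sum>s'\<in>UNIV. pmf (P a s) s' * Z a s') - rr s a * D s" for a
    by (rule step_eq) (simp add: Z_def F_def D_def algebra_simps)
  have eq: "D s + (Eincr (Suc k) V s - Eincr (Suc k) W s)
      = (1 - Er s) * D s + (\<Sum>a\<in>UNIV. pmf (\<pi>' s) a * (\<Sum>s'\<in>UNIV. pmf (P a s) s' * Z a s'))"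
  proof -
    have "Eincr (Suc k) V s - Eincr (Suc k) W s
      = (\<Sum>a\<in>UNIV. pmf (\<pi>' s) a * ((\<Sum>s'\<in>UNIV. pmf (P a s) s' * Z a s') - rr s a * D s))"
      unfolding Eincr_Suc per_a[symmetric]
      by (simp add: sum_subtractf right_diff_distrib)
    also have "\<dots> = (\<Sum>a\<in>UNIV. pmf (\<pi>' s) a * (\<Sum>s'\<in>UNIV. pmf (P a s) s' * Z a s')) - Er s * D s"
      by (simp add: Er_def sum_subtractf right_diff_distrib sum_distrib_right mult.assoc)
    finally show ?thesis by (simp add: algebra_simps)
  qed
  have Zb: "\<bar>Z a s'\<bar> \<le> \<beta> * (rr s a - cc s a) * d + \<beta> * cc s a * (gn k * d)" for a s'
  proof -
    have c1: "0 \<le> \<beta> * (rr s a - cc s a)" using beta cc_rr[of s a] by simp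
    have c2: "0 \<le> \<beta> * cc s a" using beta cc_nonneg[of s a] by simp
    have "\<bar>Z a s'\<bar> \<le> \<bar>\<beta> * (rr s a - cc s a) * D s'\<bar> + \<bar>\<beta> * cc s a * F s'\<bar>"
      unfolding Z_def by (rule abs_triangle_ineq)
    also have "\<dots> = \<beta> * (rr s a - cc s a) * \<bar>D s'\<bar> + \<beta> * cc s a * \<bar>F s'\<bar>"
      by (simp only: abs_mult[of "\<beta> * (rr s a - cc s a)" "D s'"] abs_of_nonneg[OF c1]
            abs_mult[of "\<beta> * cc s a" "F s'"] abs_of_nonneg[OF c2])
    also have "\<dots> \<le> \<beta> * (rr s a - cc s a) * d + \<beta> * cc s a * (gn k * d)"
      using c1 c2 Dd[of s'] Fd[of s'] by (intro add_mono mult_left_mono) auto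
    finally show ?thesis .
  qed
  have inner: "\<bar>\<Sum>s'\<in>UNIV. pmf (P a s) s' * Z a s'\<bar> \<le> \<beta> * (rr s a - cc s a) * d + \<beta> * cc s a * (gn k * d)" for a
  proof -
    have "\<bar>\<Sum>s'\<in>UNIV. pmf (P a s) s' * Z a s'\<bar> \<le> (\<Sum>s'\<in>UNIV. \<bar>pmf (P a s) s' * Z a s'\<bar>)" by (rule sum_abs)
    also have "\<dots> \<le> (\<Sum>s'\<in>UNIV. pmf (P a s) s' * (\<beta> * (rr s a - cc s a) * d + \<beta> * cc s a * (gn k * d)))"
      by (intro sum_mono) (simp add: abs_mult mult_left_mono Zb)
    also have "\<dots> = \<beta> * (rr s a - cc s a) * d + \<beta> * cc s a * (gn k * d)"
      by (simp add: sum_distrib_right[symmetric] sum_pmf_UNIV)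
    finally show ?thesis .
  qed
  have outer: "\<bar>\<Sum>a\<in>UNIV. pmf (\<pi>' s) a * (\<Sum>s'\<in>UNIV. pmf (P a s) s' * Z a s')\<bar>
     \<le> \<beta> * (Er s - Ec s) * d + \<beta> * Ec s * (gn k * d)"
  proof -
    have "\<bar>\<Sum>a\<in>UNIV. pmf (\<pi>' s) a * (\<Sum>s'\<in>UNIV. pmf (P a s) s' * Z a s')\<bar>
        \<le> (\<Sum>a\<in>UNIV. \<bar>pmf (\<pi>' s) a * (\<Sum>s'\<in>UNIV. pmf (P a s) s' * Z a s')\<bar>)" by (rule sum_abs)
    also have "\<dots> \<le> (\<Sum>a\<in>UNIV. pmf (\<pi>' s) a * (\<beta> * (rr s a - cc s a) * d + \<beta> * cc s a * (gn k * d)))"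
      by (intro sum_mono) (simp add: abs_mult mult_left_mono inner)
    also have "\<dots> = \<beta> * (Er s - Ec s) * d + \<beta> * Ec s * (gn k * d)"
      by (simp add: Er_def Ec_def algebra_simps sum.distrib sum_subtractf sum_distrib_left sum_distrib_right)
    finally show ?thesis .
  qed
  have "\<bar>D s + (Eincr (Suc k) V s - Eincr (Suc k) W s)\<bar> \<le> (1 - Er s) * d + (\<beta> * (Er s - Ec s) * d + \<beta> * Ec s * (gn k * d))"
  proof -
    have "\<bar>(1 - Er s) * D s\<bar> \<le> (1 - Er s) * d"
      using Erho_le1[of s] Dd[of s] by (simp add: abs_mult Er_def mult_left_mono)
    then show ?thesis unfolding eq using outer abs_triangle_ineq by (smt (verit))
  qed
  also have "\<dots> = d * (1 - (1-\<beta>) * Er s - \<beta> * Ec s * (1 - gn k))" by (simp add: algebra_simps)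
  also have "\<dots> \<le> d * gn (Suc k)"
  proof -
    have "(1-\<beta>) * kr \<le> (1-\<beta>) * Er s" using beta kr_le[of s] by simp
    moreover have "\<beta> * kc * (1 - gn k) \<le> \<beta> * Ec s * (1 - gn k)"
      using beta kc_le[of s] gn_le1[of k] by (intro mult_right_mono mult_left_mono) auto
    ultimately show ?thesis unfolding gn_Suc using d0 by (intro mult_left_mono) auto
  qed
  finally show ?case by (simp add: D_def d_def mult.commute)
qed

end

context vt begin

abbreviation cp where "cp \<equiv> clipped_policy \<rho>bar \<pi> \<pi>'"
abbreviation Vstar where "Vstar \<equiv> value_fun P R \<beta> cp"

lemma cp_eq: "cp s a = pmf (\<pi>' s) a * rr s a / Er s"
  unfolding clipped_policy_def Er_def pi'_rr ..

lemma cp_nonneg: "cp s a \<ge> 0"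
  unfolding cp_eq using Er_pos[of s] rr_nonneg[of s a] by simp

lemma cp_sum: "(\<Sum>a\<in>UNIV. cp s a) = 1"
  unfolding cp_eq using Er_pos[of s] by (simp add: sum_divide_distrib[symmetric] Er_def)

lemma er_bounds: "0 \<le> exp_reward P R cp k s \<and> exp_reward P R cp k s \<le> 1"
proof (induction k arbitrary: s)
  case 0
  have "(\<Sum>a\<in>UNIV. cp s a * R s a) \<le> (\<Sum>a\<in>UNIV. cp s a)"
    using R_range cp_nonneg by (intro sum_mono) (simp add: mult_left_le)
  moreover have "(\<Sum>a\<in>UNIV. cp s a * R s a) \<ge> 0"
    using R_range cp_nonneg by (intro sum_nonneg) simp
  ultimately show ?case by (simp add: cp_sum)
next
  case (Suc k)
  have in1: "0 \<le> (\<Sum>s'\<in>UNIV. pmf (P a s) s' * exp_reward P R cp k s') \<and> (\<Sum>s'\<in>UNIV. pmf (P a s) s' * exp_reward P R cp k s') \<le> 1" for a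
  proof -
    have "(\<Sum>s'\<in>UNIV. pmf (P a s) s' * exp_reward P R cp k s') \<le> (\<Sum>s'\<in>UNIV. pmf (P a s) s')"
      using Suc.IH by (intro sum_mono) (simp add: mult_left_le)
    moreover have "0 \<le> (\<Sum>s'\<in>UNIV. pmf (P a s) s' * exp_reward P R cp k s')"
      using Suc.IH by (intro sum_nonneg) simp
    ultimately show ?thesis by (simp add: sum_pmf_UNIV)
  qed
  have "(\<Sum>a\<in>UNIV. cp s a * (\<Sum>s'\<in>UNIV. pmf (P a s) s' * exp_reward P R cp k s')) \<le> (\<Sum>a\<in>UNIV. cp s a)"
    using in1 cp_nonneg by (intro sum_mono) (simp add: mult_left_le)
  moreover have "0 \<le> (\<Sum>a\<in>UNIV. cp s a * (\<Sum>s'\<in>UNIV. pmf (P a s) s' * exp_reward P R cp k s'))"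
    using in1 cp_nonneg by (intro sum_nonneg) simp
  ultimately show ?case by (simp add: cp_sum)
qed

lemma er_summable: "summable (\<lambda>k. \<beta> ^ k * exp_reward P R cp k s)"
proof (rule summable_comparison_test[where g="\<lambda>k. \<beta> ^ k"])
  show "\<exists>N. \<forall>n\<ge>N. norm (\<beta> ^ n * exp_reward P R cp n s) \<le> \<beta> ^ n"
    using er_bounds beta by (auto simp: abs_mult intro!: mult_left_le)
  show "summable (\<lambda>k. \<beta> ^ k)" using beta by (simp add: summable_geometric)
qed

lemma bellman: "Vstar s = (\<Sum>a\<in>UNIV. cp s a * (R s a + \<beta> * (\<Sum>s'\<in>UNIV. pmf (P a s) s' * Vstar s')))"
proof -
  have "Vstar s = exp_reward P R cp 0 s + (\<Sum>k. \<beta> ^ Suc k * exp_reward P R cp (Suc k) s)"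
    unfolding value_fun_def using suminf_split_head[OF er_summable[of s]] by simp
  also have "(\<Sum>k. \<beta> ^ Suc k * exp_reward P R cp (Suc k) s)
     = (\<Sum>k. \<Sum>a\<in>UNIV. \<Sum>s'\<in>UNIV. \<beta> * (cp s a * (pmf (P a s) s' * (\<beta> ^ k * exp_reward P R cp k s'))))"
    by (simp add: sum_distrib_left algebra_simps)
  also have "\<dots> = (\<Sum>a\<in>UNIV. \<Sum>s'\<in>UNIV. \<Sum>k. \<beta> * (cp s a * (pmf (P a s) s' * (\<beta> ^ k * exp_reward P R cp k s'))))"
    by (simp add: suminf_sum summable_sum summable_mult er_summable)
  also have "\<dots> = (\<Sum>a\<in>UNIV. \<Sum>s'\<in>UNIV. \<beta> * (cp s a * (pmf (P a s) s' * Vstar s')))"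
    unfolding value_fun_def by (simp add: suminf_mult summable_mult er_summable)
  finally show ?thesis
    by (simp add: sum_distrib_left sum.distrib algebra_simps)
qed

lemma aff_sum: "(\<Sum>s'\<in>UNIV. pmf p s' * (c + d * f s')) = c + d * (\<Sum>s'\<in>UNIV. pmf p s' * f s')"
  for p :: "'s pmf"
proof -
  have "(\<Sum>s'\<in>UNIV. pmf p s' * (c + d * f s')) = (\<Sum>s'\<in>UNIV. pmf p s') * c + d * (\<Sum>s'\<in>UNIV. pmf p s' * f s')"
    by (simp add: sum.distrib sum_distrib_left sum_distrib_right algebra_simps)
  then show ?thesis by (simp add: sum_pmf_UNIV)
qed

lemma fixed_point: "Eincr k Vstar s = 0"
proof (induction k arbitrary: s)
  case 0 then show ?case by (simp add: Eincr_0)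
next
  case (Suc k)
  have "Eincr (Suc k) Vstar s = (\<Sum>a\<in>UNIV. pmf (\<pi>' s) a * rr s a * (R s a + \<beta> * (\<Sum>s'\<in>UNIV. pmf (P a s) s' * Vstar s') - Vstar s))"
    unfolding Eincr_Suc Suc.IH
  proof (intro sum.cong refl)
    fix a
    have "(\<Sum>s'\<in>UNIV. pmf (P a s) s' * (rr s a * (R s a + \<beta> * Vstar s' - Vstar s) + \<beta> * cc s a * 0))
      = (\<Sum>s'\<in>UNIV. pmf (P a s) s' * (rr s a * (R s a - Vstar s) + (rr s a * \<beta>) * Vstar s'))"
      by (simp add: algebra_simps)
    also have "\<dots> = rr s a * (R s a + \<beta> * (\<Sum>s'\<in>UNIV. pmf (P a s) s' * Vstar s') - Vstar s)"
      by (subst aff_sum) (simp add: algebra_simps)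
    finally show "pmf (\<pi>' s) a * (\<Sum>s'\<in>UNIV. pmf (P a s) s' * (rr s a * (R s a + \<beta> * Vstar s' - Vstar s) + \<beta> * cc s a * 0))
      = pmf (\<pi>' s) a * rr s a * (R s a + \<beta> * (\<Sum>s'\<in>UNIV. pmf (P a s) s' * Vstar s') - Vstar s)" by simp
  qed
  also have "\<dots> = Er s * (\<Sum>a\<in>UNIV. cp s a * (R s a + \<beta> * (\<Sum>s'\<in>UNIV. pmf (P a s) s' * Vstar s') - Vstar s))"
    using Er_pos[of s] by (simp add: cp_eq sum_distrib_left)
  also have "(\<Sum>a\<in>UNIV. cp s a * (R s a + \<beta> * (\<Sum>s'\<in>UNIV. pmf (P a s) s' * Vstar s') - Vstar s)) = 0"
    using bellman[of s] cp_sum[of s]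
    by (simp add: right_diff_distrib sum_subtractf sum_distrib_right[symmetric])
  finally show ?case by simp
qed

end

context vt begin

definition B0 where "B0 n = \<rho>bar * (\<Sum>t<n. (\<beta>*cbar)^t)"

lemma incr_bound: "\<bar>incr n V \<tau>\<bar> \<le> B0 n * (1 + 2 * sup_norm V)"
proof -
  define M where "M = sup_norm V"
  have M0: "M \<ge> 0" by (simp add: M_def sup_norm_nonneg)
  have VM: "\<bar>V s\<bar> \<le> M" for s by (simp add: M_def sup_norm_ge)
  have trm: "\<bar>\<beta> ^ t
        * (\<Prod>j<t. min cbar (is_ratio \<pi> \<pi>' (traj_state \<tau> j) (traj_action \<tau> j)))
        * min \<rho>bar (is_ratio \<pi> \<pi>' (traj_state \<tau> t) (traj_action \<tau> t))
        * (R (traj_state \<tau> t) (traj_action \<tau> t) + \<beta> * V (traj_state \<tau> (Suc t)) - V (traj_state \<tau> t))\<bar>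
      \<le> \<rho>bar * (\<beta>*cbar)^t * (1 + 2 * M)" for t
  proof -
    define pr where "pr = (\<Prod>j<t. min cbar (is_ratio \<pi> \<pi>' (traj_state \<tau> j) (traj_action \<tau> j)))"
    define rh where "rh = min \<rho>bar (is_ratio \<pi> \<pi>' (traj_state \<tau> t) (traj_action \<tau> t))"
    define de where "de = R (traj_state \<tau> t) (traj_action \<tau> t) + \<beta> * V (traj_state \<tau> (Suc t)) - V (traj_state \<tau> t)"
    have pr0: "0 \<le> pr" unfolding pr_def using trunc ratio_nonneg by (intro prod_nonneg) auto
    have pr1: "pr \<le> cbar ^ t" unfolding pr_def
      using prod_mono[of "{..<t}" "\<lambda>j. min cbar (is_ratio \<pi> \<pi>' (traj_state \<tau> j) (traj_action \<tau> j))" "\<lambda>_. cbar"]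
        trunc ratio_nonneg by auto
    have rh0: "0 \<le> rh" "rh \<le> \<rho>bar" unfolding rh_def using trunc ratio_nonneg by auto
    have de1: "\<bar>de\<bar> \<le> 1 + 2 * M"
    proof -
      have "\<bar>\<beta> * V (traj_state \<tau> (Suc t))\<bar> \<le> \<bar>V (traj_state \<tau> (Suc t))\<bar>"
        using beta by (simp add: abs_mult mult_left_le_one_le)
      then have "\<bar>\<beta> * V (traj_state \<tau> (Suc t))\<bar> \<le> M" using VM[of "traj_state \<tau> (Suc t)"] by linarith
      then show ?thesis unfolding de_def using R_range[of "traj_state \<tau> t" "traj_action \<tau> t"] VM[of "traj_state \<tau> t"]
        by (smt (verit))
    qed
    have "\<bar>\<beta> ^ t * pr * rh * de\<bar> = \<beta> ^ t * pr * rh * \<bar>de\<bar>"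
      using beta pr0 rh0 by (simp add: abs_mult)
    also have "\<dots> \<le> \<beta> ^ t * cbar ^ t * \<rho>bar * (1 + 2 * M)"
      using beta pr0 pr1 rh0 de1 by (intro mult_mono) auto
    also have "\<dots> = \<rho>bar * (\<beta>*cbar)^t * (1 + 2 * M)" by (simp add: power_mult_distrib)
    finally show ?thesis unfolding pr_def rh_def de_def .
  qed
  have "\<bar>incr n V \<tau>\<bar> \<le> (\<Sum>t<n. \<rho>bar * (\<beta>*cbar)^t * (1 + 2 * M))"
    unfolding vtrace_incr_def by (rule order_trans[OF sum_abs sum_mono]) (rule trm)
  also have "\<dots> = B0 n * (1 + 2 * M)" by (simp add: B0_def sum_distrib_left sum_distrib_right)
  finally show ?thesis by (simp add: M_def)
qed

lemma B0_sq: "(B0 n)\<^sup>2 \<le> vtrace_A \<beta> cbar \<rho>bar n / 32"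
proof -
  define x where "x = \<beta> * cbar"
  have x0: "x > 0" using beta trunc by (simp add: x_def)
  have r0: "\<rho>bar > 0" using trunc by simp
  have S0: "(\<Sum>t<n. x^t) \<ge> 0" using x0 by (intro sum_nonneg) simp
  consider "x < 1" | "x = 1" | "x > 1" by linarith
  then show ?thesis
  proof cases
    case 1
    have "(\<Sum>t<n. x^t) = (1 - x^n) / (1 - x)" using 1 by (simp add: sum_gp_strict)
    also have "\<dots> \<le> 1 / (1 - x)" using 1 x0 by (intro divide_right_mono) auto
    finally have "(\<Sum>t<n. x^t) \<le> 1 / (1 - x)" .
    then have "(\<rho>bar * (\<Sum>t<n. x^t))\<^sup>2 \<le> (\<rho>bar * (1 / (1 - x)))\<^sup>2"
      using S0 r0 by (intro power_mono mult_left_mono) auto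
    then show ?thesis using 1 unfolding B0_def vtrace_A_def x_def[symmetric]
      by (simp add: power_divide)
  next
    case 2
    then show ?thesis unfolding B0_def vtrace_A_def x_def[symmetric] by (simp add: power_mult_distrib)
  next
    case 3
    have "(\<Sum>t<n. x^t) = (x^n - 1) / (x - 1)"
    proof -
      have "x \<noteq> 1" using 3 by simp
      then have "(\<Sum>t<n. x^t) = (1 - x^n) / (1 - x)" by (simp add: sum_gp_strict)
      also have "\<dots> = (x^n - 1) / (x - 1)"
        by (metis minus_diff_eq minus_divide_divide)
      finally show ?thesis .
    qed
    also have "\<dots> \<le> x^n / (x - 1)" using 3 by (intro divide_right_mono) auto
    finally have "(\<Sum>t<n. x^t) \<le> x^n / (x - 1)" .
    then have "(\<rho>bar * (\<Sum>t<n. x^t))\<^sup>2 \<le> (\<rho>bar * (x^n / (x - 1)))\<^sup>2"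
      using S0 r0 by (intro power_mono mult_left_mono) auto
    moreover have "(\<rho>bar * (x^n / (x - 1)))\<^sup>2 = \<rho>bar\<^sup>2 * x ^ (2*n) / (x - 1)\<^sup>2"
      by (simp add: power_divide power_mult_distrib power_mult[symmetric] mult.commute[of 2 n])
    ultimately show ?thesis using 3 unfolding B0_def vtrace_A_def x_def[symmetric] by simp
  qed
qed

end

lemma exp_DD:
  fixes p :: "'w pmf" and Y :: "'w \<Rightarrow> 's::finite \<Rightarrow> real"
  assumes fin: "finite (set_pmf p)"
  shows "measure_pmf.expectation p (\<lambda>\<omega>. DD m x (Y \<omega>)) = DD m x (\<lambda>s. measure_pmf.expectation p (\<lambda>\<omega>. Y \<omega> s))"
proof -
  have i: "integrable (measure_pmf p) f" for f :: "'w \<Rightarrow> real" using fin by (rule integrable_measure_pmf_finite)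
  show ?thesis unfolding DD_def
    by (simp add: Bochner_Integration.integral_sum[OF i] i)
qed

lemma sup_norm_add: "sup_norm (\<lambda>s. x s + y s) \<le> sup_norm x + sup_norm y"
  by (rule sup_norm_le) (metis abs_triangle_ineq add_mono order_trans sup_norm_ge)

lemma sup_norm_scale: "c \<ge> 0 \<Longrightarrow> sup_norm (\<lambda>s. c * x s) \<le> c * b" if "\<And>s. \<bar>x s\<bar> \<le> b" for c b
  by (rule sup_norm_le) (simp add: abs_mult mult_left_mono that)

context vt begin

lemma Pi_traj_finite: "finite (set_pmf (Pi_pmf UNIV undefined (\<lambda>s. traj P \<pi>' n s)))"
  by (subst set_Pi_pmf) (auto intro!: finite_PiE_dflt simp: traj_finite)

lemma dist_finite: "finite (set_pmf (vtrace_dist P R \<beta> \<pi> \<pi>' cbar \<rho>bar n \<epsilon> V0 k))"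
proof (induction k)
  case 0 then show ?case by simp
next
  case (Suc k)
  show ?case using Suc Pi_traj_finite by (auto intro!: finite_UN_I)
qed

lemma exp_dist_Suc:
  fixes h :: "('s \<Rightarrow> real) \<Rightarrow> real"
  shows "measure_pmf.expectation (vtrace_dist P R \<beta> \<pi> \<pi>' cbar \<rho>bar n \<epsilon> V0 (Suc k)) h
   = measure_pmf.expectation (vtrace_dist P R \<beta> \<pi> \<pi>' cbar \<rho>bar n \<epsilon> V0 k)
      (\<lambda>V. measure_pmf.expectation (Pi_pmf UNIV undefined (\<lambda>s. traj P \<pi>' n s))
         (\<lambda>\<tau>s. h (\<lambda>s. V s + \<epsilon> k * incr n V (\<tau>s s))))"
proof -
  have "measure_pmf.expectation (vtrace_dist P R \<beta> \<pi> \<pi>' cbar \<rho>bar n \<epsilon> V0 (Suc k)) h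
   = measure_pmf.expectation (vtrace_dist P R \<beta> \<pi> \<pi>' cbar \<rho>bar n \<epsilon> V0 k)
      (\<lambda>V. measure_pmf.expectation (Pi_pmf UNIV undefined (\<lambda>s. traj P \<pi>' n s) \<bind> (\<lambda>\<tau>s. return_pmf (\<lambda>s. V s + \<epsilon> k * incr n V (\<tau>s s)))) h)"
    unfolding vtrace_dist.simps(2)
    apply (subst exp_bind_fin)
      apply (rule dist_finite)
     apply (simp add: Pi_traj_finite)
    apply (rule refl)
    done
  also have "\<dots> = measure_pmf.expectation (vtrace_dist P R \<beta> \<pi> \<pi>' cbar \<rho>bar n \<epsilon> V0 k)
      (\<lambda>V. measure_pmf.expectation (Pi_pmf UNIV undefined (\<lambda>s. traj P \<pi>' n s))
         (\<lambda>\<tau>s. h (\<lambda>s. V s + \<epsilon> k * incr n V (\<tau>s s))))"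
  proof (rule Bochner_Integration.integral_cong[OF refl])
    fix V
    show "measure_pmf.expectation (Pi_pmf UNIV undefined (\<lambda>s. traj P \<pi>' n s) \<bind> (\<lambda>\<tau>s. return_pmf (\<lambda>s. V s + \<epsilon> k * incr n V (\<tau>s s)))) h
      = measure_pmf.expectation (Pi_pmf UNIV undefined (\<lambda>s. traj P \<pi>' n s)) (\<lambda>\<tau>s. h (\<lambda>s. V s + \<epsilon> k * incr n V (\<tau>s s)))"
      by (subst exp_bind_fin) (auto simp: Pi_traj_finite)
  qed
  finally show ?thesis .
qed

lemma exp_component:
  fixes f :: "('s \<times> 'a) list \<times> 's \<Rightarrow> real"
  shows "measure_pmf.expectation (Pi_pmf UNIV undefined (\<lambda>s. traj P \<pi>' n s)) (\<lambda>\<tau>s. f (\<tau>s s))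
   = measure_pmf.expectation (traj P \<pi>' n s) f"
proof -
  have "map_pmf (\<lambda>g. g s) (Pi_pmf UNIV undefined (\<lambda>s. traj P \<pi>' n s)) = traj P \<pi>' n s"
    by (subst Pi_pmf_component) auto
  moreover have "measure_pmf.expectation (map_pmf (\<lambda>g. g s) (Pi_pmf UNIV undefined (\<lambda>s. traj P \<pi>' n s))) f
     = measure_pmf.expectation (Pi_pmf UNIV undefined (\<lambda>s. traj P \<pi>' n s)) (\<lambda>\<tau>s. f (\<tau>s s))"
    by simp
  ultimately show ?thesis by simp
qed

lemma one_step:
  fixes V :: "'s \<Rightarrow> real" and x :: "'s \<Rightarrow> real"
  assumes m: "m \<ge> 2" and \<eta>: "\<eta> \<ge> 0" and xdef: "x = (\<lambda>s. V s - Vstar s)"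
  shows "measure_pmf.expectation (Pi_pmf UNIV undefined (\<lambda>s. traj P \<pi>' n s))
           (\<lambda>\<tau>s. gg m (\<lambda>s. (V s + \<eta> * incr n V (\<tau>s s)) - Vstar s))
      \<le> gg m x + \<eta> * DD m x (Eincr n V)
        + (2 * real m - 1) * (real CARD('s) powr (1/real m) * (\<eta> * (B0 n * (1 + 2 * sup_norm V)))\<^sup>2)"
proof -
  define Q where "Q = Pi_pmf UNIV undefined (\<lambda>s. traj P \<pi>' n s)"
  define B where "B = B0 n * (1 + 2 * sup_norm V)"
  have fin: "finite (set_pmf Q)" unfolding Q_def by (rule Pi_traj_finite)
  have i: "integrable (measure_pmf Q) f" for f :: "_ \<Rightarrow> real" using fin by (rule integrable_measure_pmf_finite)
  have m1: "m \<ge> 1" using m by simp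
  have pw: "gg m (\<lambda>s. (V s + \<eta> * incr n V (\<tau>s s)) - Vstar s)
      \<le> gg m x + DD m x (\<lambda>s. \<eta> * incr n V (\<tau>s s)) + (2 * real m - 1) * (real CARD('s) powr (1/real m) * (\<eta> * B)\<^sup>2)"
    for \<tau>s
  proof -
    define h where "h s = \<eta> * incr n V (\<tau>s s)" for s
    have "gg m (\<lambda>s. (V s + \<eta> * incr n V (\<tau>s s)) - Vstar s) = gg m (\<lambda>s. x s + h s)"
      by (simp add: xdef h_def algebra_simps)
    also have "\<dots> \<le> gg m x + DD m x h + (2 * real m - 1) * gg m h" by (rule smooth[OF m])
    also have "gg m h \<le> real CARD('s) powr (1/real m) * (\<eta> * B)\<^sup>2"
    proof -
      have "sup_norm h \<le> \<eta> * B" unfolding h_def B_def using \<eta> by (intro sup_norm_scale incr_bound)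
      then have "(sup_norm h)\<^sup>2 \<le> (\<eta> * B)\<^sup>2" using sup_norm_nonneg by (intro power_mono) auto
      then show ?thesis using gg_bounds(2)[OF m1, of h] by (smt (verit) mult_left_mono powr_ge_zero)
    qed
    then have "(2 * real m - 1) * gg m h \<le> (2 * real m - 1) * (real CARD('s) powr (1/real m) * (\<eta> * B)\<^sup>2)"
      using m by (intro mult_left_mono) auto
    finally show ?thesis unfolding h_def by simp
  qed
  have "measure_pmf.expectation Q (\<lambda>\<tau>s. gg m (\<lambda>s. (V s + \<eta> * incr n V (\<tau>s s)) - Vstar s))
      \<le> measure_pmf.expectation Q (\<lambda>\<tau>s. gg m x + DD m x (\<lambda>s. \<eta> * incr n V (\<tau>s s)) + (2 * real m - 1) * (real CARD('s) powr (1/real m) * (\<eta> * B)\<^sup>2))"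
    by (intro integral_mono i pw)
  also have "\<dots> = gg m x + measure_pmf.expectation Q (\<lambda>\<tau>s. DD m x (\<lambda>s. \<eta> * incr n V (\<tau>s s))) + (2 * real m - 1) * (real CARD('s) powr (1/real m) * (\<eta> * B)\<^sup>2)"
    by (simp add: i)
  also have "measure_pmf.expectation Q (\<lambda>\<tau>s. DD m x (\<lambda>s. \<eta> * incr n V (\<tau>s s))) = \<eta> * DD m x (Eincr n V)"
  proof -
    have "measure_pmf.expectation Q (\<lambda>\<tau>s. DD m x (\<lambda>s. \<eta> * incr n V (\<tau>s s)))
        = DD m x (\<lambda>s. measure_pmf.expectation Q (\<lambda>\<tau>s. \<eta> * incr n V (\<tau>s s)))"
      by (rule exp_DD[OF fin])
    also have "(\<lambda>s. measure_pmf.expectation Q (\<lambda>\<tau>s. \<eta> * incr n V (\<tau>s s))) = (\<lambda>s. \<eta> * Eincr n V s)"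
      unfolding Q_def Eincr_def by (simp add: exp_component)
    finally show ?thesis by (simp add: DD_lin)
  qed
  finally show ?thesis unfolding Q_def B_def .
qed

end

context vt begin

lemma sup_norm_const1: "sup_norm (\<lambda>_::'s. 1::real) = 1"
  using sup_norm_le[of "\<lambda>_::'s. 1::real" 1] sup_norm_ge[of "\<lambda>_::'s. 1::real" undefined] by simp

lemma gn_nonneg: "gn k \<ge> 0"
  using contraction[of "\<lambda>_. 1" undefined "\<lambda>_. 0" k] sup_norm_const1 by simp

lemma drift:
  assumes m: "m \<ge> 2" and xdef: "x = (\<lambda>s. V s - Vstar s)"
  shows "DD m x (Eincr n V) \<le> - 2 * (1 - real CARD('s) powr (1/(2*real m)) * gn n) * gg m x"
proof -
  have m1: "m \<ge> 1" "m > 0" using m by auto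
  define f where "f s = x s + (Eincr n V s - Eincr n Vstar s)" for s
  have Ef: "Eincr n V = (\<lambda>s. f s + (-1) * x s)" by (auto simp: f_def fixed_point)
  have "DD m x (Eincr n V) = DD m x f - 2 * gg m x"
    unfolding Ef DD_add DD_lin DD_self[OF m1(2)] by simp
  moreover have "DD m x f \<le> 2 * real CARD('s) powr (1/(2*real m)) * gn n * gg m x"
  proof -
    define r where "r = NN m x powr (1/(2*real m))"
    have r0: "r \<ge> 0" by (simp add: r_def)
    have fb: "sup_norm f \<le> gn n * sup_norm x"
      by (rule sup_norm_le) (unfold f_def xdef, rule contraction)
    have "DD m x f \<le> 2 * r * NN m f powr (1/(2*real m))" unfolding r_def by (rule DD_bound[OF m1(1)])
    also have "\<dots> \<le> 2 * r * (real CARD('s) powr (1/(2*real m)) * sup_norm f)"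
      using NN_root_bounds(2)[OF m1(1), of f] r0 by (intro mult_left_mono) auto
    also have "\<dots> \<le> 2 * r * (real CARD('s) powr (1/(2*real m)) * (gn n * sup_norm x))"
      using fb r0 by (intro mult_left_mono) auto
    also have "\<dots> \<le> 2 * r * (real CARD('s) powr (1/(2*real m)) * (gn n * r))"
      using NN_root_bounds(1)[OF m1(1), of x] r0 gn_nonneg[of n] unfolding r_def[symmetric]
      by (intro mult_left_mono) auto
    also have "\<dots> = 2 * real CARD('s) powr (1/(2*real m)) * gn n * gg m x"
      unfolding gg_sq r_def[symmetric] by (simp add: power2_eq_square)
    finally show ?thesis .
  qed
  ultimately show ?thesis by (simp add: algebra_simps)
qed

lemma per_V:
  assumes m: "m \<ge> 2" and \<eta>: "\<eta> \<ge> 0"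
  shows "measure_pmf.expectation (Pi_pmf UNIV undefined (\<lambda>s. traj P \<pi>' n s))
           (\<lambda>\<tau>s. gg m (\<lambda>s. (V s + \<eta> * incr n V (\<tau>s s)) - Vstar s))
      \<le> (1 - 2 * \<eta> * (1 - real CARD('s) powr (1/(2*real m)) * gn n)) * gg m (\<lambda>s. V s - Vstar s)
        + (3/8) * (2 * real m - 1) * real CARD('s) powr (1/real m) * \<eta>\<^sup>2 * vtrace_A \<beta> cbar \<rho>bar n
           * (gg m (\<lambda>s. V s - Vstar s) + ((sup_norm Vstar)\<^sup>2 + 1))"
proof -
  define x where "x = (\<lambda>s. V s - Vstar s)"
  define c1 where "c1 = real CARD('s) powr (1/real m)"
  define A where "A = vtrace_A \<beta> cbar \<rho>bar n"
  have c10: "c1 \<ge> 0" by (simp add: c1_def)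
  have m1: "m \<ge> 1" using m by simp
  have A0: "A \<ge> 0"
  proof -
    have "0 \<le> (B0 n)\<^sup>2" by simp
    then show ?thesis using B0_sq[of n] unfolding A_def by linarith
  qed
  have "(B0 n * (1 + 2 * sup_norm V))\<^sup>2 \<le> (A/32) * (12 * (gg m x + ((sup_norm Vstar)\<^sup>2 + 1)))"
  proof -
    have VV: "sup_norm V \<le> sup_norm x + sup_norm Vstar"
      using sup_norm_add[of x Vstar] by (simp add: x_def)
    have "(1 + 2 * sup_norm V)\<^sup>2 \<le> (1 + 2 * sup_norm x + 2 * sup_norm Vstar)\<^sup>2"
      using VV sup_norm_nonneg[of V] by (intro power_mono) auto
    also have "\<dots> \<le> 12 * ((sup_norm x)\<^sup>2 + ((sup_norm Vstar)\<^sup>2 + 1))"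
    proof -
      define u where "u = (1::real)"
      define v where "v = 2 * sup_norm x"
      define w where "w = 2 * sup_norm Vstar"
      have e: "3*(u\<^sup>2+v\<^sup>2+w\<^sup>2) - (u+v+w)\<^sup>2 = (u-v)\<^sup>2 + (v-w)\<^sup>2 + (u-w)\<^sup>2"
        by (simp add: power2_eq_square algebra_simps)
      have "(u+v+w)\<^sup>2 \<le> 3*(u\<^sup>2+v\<^sup>2+w\<^sup>2)" using e
        by (metis add_nonneg_nonneg diff_ge_0_iff_ge zero_le_power2)
      moreover have "3*(u\<^sup>2+v\<^sup>2+w\<^sup>2) \<le> 12 * ((sup_norm x)\<^sup>2 + ((sup_norm Vstar)\<^sup>2 + 1))"
        by (simp add: u_def v_def w_def power2_eq_square)
      ultimately show ?thesis by (simp add: u_def v_def w_def)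
    qed
    also have "\<dots> \<le> 12 * (gg m x + ((sup_norm Vstar)\<^sup>2 + 1))"
      using gg_bounds(1)[OF m1, of x] by simp
    finally have h1: "(1 + 2 * sup_norm V)\<^sup>2 \<le> 12 * (gg m x + ((sup_norm Vstar)\<^sup>2 + 1))" .
    have "(B0 n * (1 + 2 * sup_norm V))\<^sup>2 = (B0 n)\<^sup>2 * (1 + 2 * sup_norm V)\<^sup>2" by (simp add: power_mult_distrib)
    also have "\<dots> \<le> (A/32) * (12 * (gg m x + ((sup_norm Vstar)\<^sup>2 + 1)))"
      using B0_sq[of n] h1 A0 unfolding A_def by (intro mult_mono) auto
    finally show ?thesis .
  qed
  then have noise: "(2 * real m - 1) * (c1 * (\<eta> * (B0 n * (1 + 2 * sup_norm V)))\<^sup>2)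
     \<le> (3/8) * (2 * real m - 1) * c1 * \<eta>\<^sup>2 * A * (gg m x + ((sup_norm Vstar)\<^sup>2 + 1))"
  proof -
    assume h: "(B0 n * (1 + 2 * sup_norm V))\<^sup>2 \<le> (A/32) * (12 * (gg m x + ((sup_norm Vstar)\<^sup>2 + 1)))"
    have "(2 * real m - 1) * (c1 * (\<eta> * (B0 n * (1 + 2 * sup_norm V)))\<^sup>2)
        = ((2 * real m - 1) * c1 * \<eta>\<^sup>2) * (B0 n * (1 + 2 * sup_norm V))\<^sup>2"
      by (simp add: power_mult_distrib)
    also have "\<dots> \<le> ((2 * real m - 1) * c1 * \<eta>\<^sup>2) * ((A/32) * (12 * (gg m x + ((sup_norm Vstar)\<^sup>2 + 1))))"
      using h m c10 by (intro mult_left_mono) auto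
    also have "\<dots> = (3/8) * (2 * real m - 1) * c1 * \<eta>\<^sup>2 * A * (gg m x + ((sup_norm Vstar)\<^sup>2 + 1))"
      by (simp add: field_simps)
    finally show ?thesis .
  qed
  define X where "X = 2 * \<eta> * (1 - real CARD('s) powr (1/(2*real m)) * gn n)"
  define N2 where "N2 = (3/8) * (2 * real m - 1) * c1 * \<eta>\<^sup>2 * A * (gg m x + ((sup_norm Vstar)\<^sup>2 + 1))"
  define N1 where "N1 = (2 * real m - 1) * (c1 * (\<eta> * (B0 n * (1 + 2 * sup_norm V)))\<^sup>2)"
  define E where "E = measure_pmf.expectation (Pi_pmf UNIV undefined (\<lambda>s. traj P \<pi>' n s))
           (\<lambda>\<tau>s. gg m (\<lambda>s. (V s + \<eta> * incr n V (\<tau>s s)) - Vstar s))"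
  have e1: "E \<le> gg m x + \<eta> * DD m x (Eincr n V) + N1"
    unfolding E_def N1_def c1_def by (rule one_step[OF m \<eta> x_def])
  have e2: "\<eta> * DD m x (Eincr n V) \<le> - (X * gg m x)"
  proof -
    have "\<eta> * DD m x (Eincr n V) \<le> \<eta> * (- 2 * (1 - real CARD('s) powr (1/(2*real m)) * gn n) * gg m x)"
      using drift[OF m x_def] \<eta> by (intro mult_left_mono) auto
    then show ?thesis by (simp add: X_def algebra_simps)
  qed
  have e3: "N1 \<le> N2" unfolding N1_def N2_def by (rule noise)
  have e4: "(1 - X) * gg m x = gg m x - X * gg m x" by (simp add: algebra_simps)
  have "E \<le> (1 - X) * gg m x + N2" using e1 e2 e3 e4 by linarith
  then show ?thesis unfolding E_def X_def N2_def x_def c1_def A_def .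
qed

end

context vt begin

lemma rec_step:
  fixes n :: nat and V0 :: "'s \<Rightarrow> real" and \<epsilon> :: "nat \<Rightarrow> real"
  assumes m: "m \<ge> 2" and \<eta>: "\<epsilon> k \<ge> 0"
  defines "a \<equiv> \<lambda>k. measure_pmf.expectation (vtrace_dist P R \<beta> \<pi> \<pi>' cbar \<rho>bar n \<epsilon> V0 k) (\<lambda>V. gg m (\<lambda>s. V s - Vstar s))"
  shows "a (Suc k) \<le> (1 - 2 * \<epsilon> k * (1 - real CARD('s) powr (1/(2*real m)) * gn n)) * a k
     + (3/8) * (2 * real m - 1) * real CARD('s) powr (1/real m) * (\<epsilon> k)\<^sup>2 * vtrace_A \<beta> cbar \<rho>bar n
           * (a k + ((sup_norm Vstar)\<^sup>2 + 1))"
proof -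
  define D where "D = vtrace_dist P R \<beta> \<pi> \<pi>' cbar \<rho>bar n \<epsilon> V0 k"
  define \<alpha> where "\<alpha> = 1 - 2 * \<epsilon> k * (1 - real CARD('s) powr (1/(2*real m)) * gn n)"
  define q where "q = (3/8) * (2 * real m - 1) * real CARD('s) powr (1/real m) * (\<epsilon> k)\<^sup>2 * vtrace_A \<beta> cbar \<rho>bar n"
  define b where "b = (sup_norm Vstar)\<^sup>2 + 1"
  have i: "integrable (measure_pmf D) f" for f :: "_ \<Rightarrow> real"
    unfolding D_def by (rule integrable_measure_pmf_finite[OF dist_finite])
  have "a (Suc k) = measure_pmf.expectation D (\<lambda>V. measure_pmf.expectation (Pi_pmf UNIV undefined (\<lambda>s. traj P \<pi>' n s))
         (\<lambda>\<tau>s. gg m (\<lambda>s. (V s + \<epsilon> k * incr n V (\<tau>s s)) - Vstar s)))"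
    unfolding a_def D_def by (rule exp_dist_Suc)
  also have "\<dots> \<le> measure_pmf.expectation D (\<lambda>V. \<alpha> * gg m (\<lambda>s. V s - Vstar s) + q * (gg m (\<lambda>s. V s - Vstar s) + b))"
    unfolding \<alpha>_def q_def b_def by (intro integral_mono i per_V[OF m \<eta>])
  also have "\<dots> = \<alpha> * a k + q * (a k + b)"
    unfolding a_def D_def[symmetric] by (simp add: i algebra_simps)
  finally show ?thesis unfolding \<alpha>_def q_def b_def .
qed

end

lemma ln2_ge: "ln (2::real) \<ge> 1/2"
proof -
  have "exp (1/2::real) ^ 2 = exp 1" by (simp add: exp_of_nat_mult[symmetric] power2_eq_square exp_add[symmetric])
  also have "\<dots> \<le> 3" by (rule exp_le)
  finally have "exp (1/2::real) ^ 2 \<le> 2^2" by simp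
  then have "exp (1/2::real) \<le> 2" by (rule power2_le_imp_le) simp
  then have "ln (exp (1/2::real)) \<le> ln 2" by (subst ln_le_cancel_iff) auto
  then show ?thesis by simp
qed

lemma exp_half_bound:
  fixes u :: real assumes "0 < u" "u \<le> 1"
  shows "exp (u/2) * (1 - u) \<le> 1 - u/2"
proof -
  have e: "exp (-(u/2)) \<ge> 1 - u/2" using exp_ge_add_one_self[of "-(u/2)"] by simp
  have p: "1 - u/2 > 0" using assms by simp
  have "exp (u/2) \<le> 1 / (1 - u/2)"
  proof -
    have "exp (u/2) * (1 - u/2) \<le> exp (u/2) * exp (-(u/2))" using e by (intro mult_left_mono) auto
    also have "\<dots> = 1" by (simp add: exp_minus)
    finally show ?thesis using p by (simp add: field_simps)
  qed
  then have "exp (u/2) * (1 - u) \<le> (1 / (1 - u/2)) * (1 - u)" using assms by (intro mult_right_mono) auto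
  also have "\<dots> \<le> 1 - u/2"
  proof -
    have "(1 - u) \<le> (1 - u/2) * (1 - u/2)" by (simp add: algebra_simps)
    then show ?thesis using p by (simp add: field_simps)
  qed
  finally show ?thesis .
qed

context vt begin

lemma gn_eq: "gn n = vtrace_gamma \<beta> kc kr n"
proof -
  have "\<beta> * kc \<le> \<beta>" using beta kc_le1 by (simp add: mult_left_le)
  then have x: "\<beta> * kc \<noteq> 1" using beta by linarith
  have "(\<Sum>t<n. (\<beta>*kc)^t) = (1 - (\<beta>*kc)^n) / (1 - \<beta>*kc)" using x by (simp add: sum_gp_strict)
  then show ?thesis unfolding gn_def vtrace_gamma_def by (simp add: field_simps)
qed

lemma gn_lt1: assumes "n \<ge> 1" shows "gn n < 1"
proof -
  have "1 \<le> (\<Sum>t<n. (\<beta>*kc)^t)"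
  proof -
    have "(\<Sum>t<n. (\<beta>*kc)^t) = 1 + (\<Sum>t\<in>{..<n}-{0}. (\<beta>*kc)^t)"
      using assms by (subst sum.remove[of _ 0]) auto
    moreover have "(\<Sum>t\<in>{..<n}-{0}. (\<beta>*kc)^t) \<ge> 0" using beta kc_nonneg by (intro sum_nonneg) simp
    ultimately show ?thesis by simp
  qed
  then have "(1-\<beta>) * kr * 1 \<le> (1-\<beta>) * kr * (\<Sum>t<n. (\<beta>*kc)^t)"
    using beta kr_pos by (intro mult_left_mono) auto
  moreover have "(1-\<beta>) * kr > 0" using beta kr_pos by simp
  ultimately show ?thesis unfolding gn_def by simp
qed

end

context vt begin

lemma main:
  fixes n :: nat and V0 :: "'s \<Rightarrow> real"
  assumes n: "n \<ge> 1" and S2: "CARD('s) \<ge> 2"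
  defines "\<gamma> \<equiv> vtrace_gamma \<beta> kc kr n"
    and "A \<equiv> vtrace_A \<beta> cbar \<rho>bar n"
    and "K \<equiv> 64 * (vtrace_A \<beta> cbar \<rho>bar n + 2) * ln (real CARD('s)) / (1 - vtrace_gamma \<beta> kc kr n) ^ 3"
    and "\<epsilon> \<equiv> (\<lambda>k::nat. (4 / (1 - vtrace_gamma \<beta> kc kr n)) / (real k + 64 * (vtrace_A \<beta> cbar \<rho>bar n + 2) * ln (real CARD('s)) / (1 - vtrace_gamma \<beta> kc kr n) ^ 3))"
  shows "\<forall>k::nat.
     measure_pmf.expectation (vtrace_dist P R \<beta> \<pi> \<pi>' cbar \<rho>bar n \<epsilon> V0 k)
        (\<lambda>V. (sup_norm (\<lambda>s. V s - Vstar s))\<^sup>2)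
     \<le> 1024 * exp 2 * ((sup_norm (\<lambda>s. V0 s - Vstar s))\<^sup>2 + 2 * (sup_norm Vstar)\<^sup>2 + 1)
        * ((A + 2) * ln (real CARD('s)) / (1 - \<gamma>) ^ 3) * (1 / (real k + K))"
proof
  fix k :: nat
  have \<gamma>g: "\<gamma> = gn n" unfolding \<gamma>_def by (simp add: gn_eq)
  define u where "u = 1 - \<gamma>"
  have u0: "u > 0" using gn_lt1[OF n] by (simp add: u_def \<gamma>g)
  have u1: "u \<le> 1" using gn_nonneg[of n] by (simp add: u_def \<gamma>g)
  have \<gamma>0: "\<gamma> \<ge> 0" using gn_nonneg[of n] by (simp add: \<gamma>g)
  define L where "L = ln (real CARD('s))"
  have cardpos: "real CARD('s) > 0" using S2 by simp
  have L2: "L \<ge> 1/2"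
  proof -
    have "ln 2 \<le> L" unfolding L_def using S2 by (subst ln_le_cancel_iff) auto
    then show ?thesis using ln2_ge by linarith
  qed
  have A0: "A \<ge> 0"
  proof -
    have "0 \<le> (B0 n)\<^sup>2" by simp
    then show ?thesis using B0_sq[of n] unfolding A_def by linarith
  qed
  have Ku: "K = 64 * (A + 2) * L / u ^ 3" unfolding K_def A_def L_def u_def \<gamma>_def ..
  have \<epsilon>u: "\<epsilon> j = (4 / u) / (real j + K)" for j unfolding \<epsilon>_def K_def u_def \<gamma>_def by simp
  have K64: "K \<ge> 64"
  proof -
    have u3: "u ^ 3 \<le> 1" "u ^ 3 > 0" using u0 u1 by (auto simp: power_le_one)
    have "(A + 2) * L \<ge> 2 * (1/2)" using A0 L2 by (intro mult_mono) auto
    then have "(A + 2) * L / u ^ 3 \<ge> 1" using u3 by (simp add: field_simps)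
    moreover have "64 * (A + 2) * L / u ^ 3 = 64 * ((A + 2) * L / u ^ 3)" by simp
    ultimately show ?thesis unfolding Ku by linarith
  qed
  define m where "m = nat \<lceil>L/u\<rceil> + 1"
  have Lu: "L/u \<ge> 1/2"
  proof -
    have "L \<le> L/u" using u0 u1 L2 by (simp add: field_simps mult_left_le)
    then show ?thesis using L2 by linarith
  qed
  have "L/u > 0" using Lu by linarith
  then have cl: "\<lceil>L/u\<rceil> \<ge> 1" by (simp add: one_le_ceiling)
  have m2: "m \<ge> 2" unfolding m_def using cl by linarith
  have rm: "real m = of_int \<lceil>L/u\<rceil> + 1" unfolding m_def using cl by simp
  have cei: "L/u \<le> of_int \<lceil>L/u\<rceil>" "of_int \<lceil>L/u\<rceil> \<le> L/u + 1"
    by (rule le_of_int_ceiling) (rule of_int_ceiling_le_add_one)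
  have mL: "L/u \<le> real m" using rm cei by linarith
  have mU: "2 * real m - 1 \<le> 8 * (L/u)"
  proof -
    have "real m \<le> L/u + 2" using rm cei by linarith
    then show ?thesis using Lu by linarith
  qed
  have mpos: "real m > 0" using m2 by simp
  have Lm: "L / real m \<le> u" using mL u0 mpos by (simp add: field_simps)
  define c1 where "c1 = real CARD('s) powr (1/real m)"
  define c2 where "c2 = real CARD('s) powr (1/(2*real m))"
  have c1b: "c1 \<le> 3"
  proof -
    have "c1 = exp (L / real m)" unfolding c1_def L_def powr_def using cardpos by simp
    also have "\<dots> \<le> exp 1" using Lm u1 by simp
    also have "\<dots> \<le> 3" by (rule exp_le)
    finally show ?thesis .
  qed
  have c10: "c1 \<ge> 0" by (simp add: c1_def)
  have c2b: "c2 \<le> exp (u/2)"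
  proof -
    have "c2 = exp (L / (2 * real m))" unfolding c2_def L_def powr_def using cardpos by simp
    also have "\<dots> \<le> exp (u/2)" using Lm by simp
    finally show ?thesis .
  qed
  have del: "1 - c2 * \<gamma> \<ge> u/2"
  proof -
    have "c2 * \<gamma> \<le> exp (u/2) * \<gamma>" using c2b \<gamma>0 by (intro mult_right_mono) auto
    also have "\<dots> = exp (u/2) * (1 - u)" by (simp add: u_def)
    also have "\<dots> \<le> 1 - u/2" by (rule exp_half_bound[OF u0 u1])
    finally show ?thesis by simp
  qed
  define b where "b = (sup_norm Vstar)\<^sup>2 + 1"
  have b0: "b \<ge> 0" by (simp add: b_def)
  define a where "a j = measure_pmf.expectation (vtrace_dist P R \<beta> \<pi> \<pi>' cbar \<rho>bar n \<epsilon> V0 j) (\<lambda>V. gg m (\<lambda>s. V s - Vstar s))" for j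
  have a0: "a j \<ge> 0" for j unfolding a_def by (intro Bochner_Integration.integral_nonneg) (simp add: gg_nonneg)
  have step: "a (Suc j) \<le> (1 - 7/(4*(real j + K))) * a j + 9*K*b/(4*(real j + K)\<^sup>2)" for j
  proof -
    define mk where "mk = real j + K"
    define \<eta> where "\<eta> = \<epsilon> j"
    have mkK: "K \<le> mk" "mk > 0" using K64 by (auto simp: mk_def)
    have \<eta>d: "\<eta> = (4/u) / mk" unfolding \<eta>_def mk_def by (rule \<epsilon>u)
    have \<eta>0: "\<eta> \<ge> 0" using \<eta>d u0 mkK by simp
    define \<alpha> where "\<alpha> = 1 - 2 * \<eta> * (1 - c2 * gn n)"
    define q where "q = (3/8) * (2 * real m - 1) * c1 * \<eta>\<^sup>2 * A"
    have r: "a (Suc j) \<le> \<alpha> * a j + q * (a j + b)"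
      using rec_step[OF m2, where n=n and \<epsilon>=\<epsilon> and k=j] \<eta>0
      unfolding a_def \<alpha>_def q_def b_def c1_def c2_def \<eta>_def A_def by simp
    have \<alpha>b: "\<alpha> \<le> 1 - 4/mk"
    proof -
      have "2 * \<eta> * (u/2) \<le> 2 * \<eta> * (1 - c2 * gn n)" using del \<eta>0 \<gamma>g by (intro mult_left_mono) auto
      moreover have "2 * \<eta> * (u/2) = 4/mk" using u0 mkK by (simp add: \<eta>d field_simps)
      ultimately show ?thesis unfolding \<alpha>_def by linarith
    qed
    have qb: "q \<le> 9*K/(4*mk\<^sup>2)"
    proof -
      have "q \<le> (3/8) * (8 * (L/u)) * 3 * \<eta>\<^sup>2 * A"
      proof -
        have "(2 * real m - 1) * c1 \<le> (8 * (L/u)) * 3"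
          using mU c1b c10 m2 by (intro mult_mono) auto
        moreover have "0 \<le> \<eta>\<^sup>2 * A" using A0 by simp
        ultimately have "(3/8) * ((2 * real m - 1) * c1) * (\<eta>\<^sup>2 * A) \<le> (3/8) * ((8 * (L/u)) * 3) * (\<eta>\<^sup>2 * A)"
          by (intro mult_right_mono mult_left_mono) auto
        moreover have "q = (3/8) * ((2 * real m - 1) * c1) * (\<eta>\<^sup>2 * A)" unfolding q_def by (simp only: mult.assoc)
        moreover have "(3/8) * (8 * (L/u)) * 3 * \<eta>\<^sup>2 * A = (3/8) * ((8 * (L/u)) * 3) * (\<eta>\<^sup>2 * A)" by (simp only: mult.assoc)
        ultimately show ?thesis by linarith
      qed
      also have "\<dots> = 144 * L * A / (u^3 * mk\<^sup>2)" using u0 mkK by (simp add: \<eta>d field_simps power2_eq_square power3_eq_cube)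
      also have "\<dots> \<le> 144 * L * (A+2) / (u^3 * mk\<^sup>2)" using u0 mkK L2 by (intro divide_right_mono mult_left_mono) auto
      also have "\<dots> = 9*K/(4*mk\<^sup>2)" unfolding Ku using u0 mkK by (simp add: field_simps)
      finally show ?thesis .
    qed
    have qb2: "q \<le> 9/(4*mk)"
    proof -
      have "9*K/(4*mk\<^sup>2) \<le> 9*mk/(4*mk\<^sup>2)" using mkK by (intro divide_right_mono) auto
      also have "\<dots> = 9/(4*mk)" using mkK by (simp add: power2_eq_square)
      finally show ?thesis using qb by linarith
    qed
    have "a (Suc j) \<le> (\<alpha> + q) * a j + q * b" using r by (simp add: algebra_simps)
    also have "\<dots> \<le> (1 - 7/(4*mk)) * a j + 9*K/(4*mk\<^sup>2) * b"
    proof (intro add_mono mult_right_mono)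
      show "\<alpha> + q \<le> 1 - 7/(4*mk)" using \<alpha>b qb2 mkK by (simp add: field_simps)
    qed (use qb a0 b0 in auto)
    finally show ?thesis by (simp add: mk_def)
  qed
  define e0 where "e0 = (sup_norm (\<lambda>s. V0 s - Vstar s))\<^sup>2"
  have e00: "e0 \<ge> 0" by (simp add: e0_def)
  define C where "C = K * (3 * e0 + 3 * b)"
  have base: "a 0 \<le> C / K"
  proof -
    have "a 0 = gg m (\<lambda>s. V0 s - Vstar s)" by (simp add: a_def)
    also have "\<dots> \<le> c1 * e0" unfolding c1_def e0_def using m2 by (intro gg_bounds(2)) auto
    also have "\<dots> \<le> 3 * e0" using c1b e00 by (intro mult_right_mono) auto
    also have "\<dots> \<le> C / K" using K64 b0 by (simp add: C_def)
    finally show ?thesis .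
  qed
  have ak: "a k \<le> C / (real k + K)"
    by (rule seq_bound[OF _ b0 a0 _ base step]) (use K64 e00 b0 in \<open>auto simp: C_def algebra_simps\<close>)
  have "measure_pmf.expectation (vtrace_dist P R \<beta> \<pi> \<pi>' cbar \<rho>bar n \<epsilon> V0 k) (\<lambda>V. (sup_norm (\<lambda>s. V s - Vstar s))\<^sup>2) \<le> a k"
    unfolding a_def using m2
    by (intro integral_mono integrable_measure_pmf_finite dist_finite gg_bounds(1)) auto
  also have "\<dots> \<le> C / (real k + K)" by (rule ak)
  also have "\<dots> \<le> 1024 * exp 2 * ((sup_norm (\<lambda>s. V0 s - Vstar s))\<^sup>2 + 2 * (sup_norm Vstar)\<^sup>2 + 1)
        * ((A + 2) * ln (real CARD('s)) / (1 - \<gamma>) ^ 3) * (1 / (real k + K))"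
  proof -
    have kK: "real k + K > 0" using K64 by simp
    have X: "3 * e0 + 3 * b \<le> 16 * exp 2 * (e0 + 2 * (sup_norm Vstar)\<^sup>2 + 1)"
    proof -
      have "1 \<le> exp (2::real)" by simp
      then have "16 * (e0 + 2 * (sup_norm Vstar)\<^sup>2 + 1) \<le> 16 * exp 2 * (e0 + 2 * (sup_norm Vstar)\<^sup>2 + 1)"
        using e00 by (intro mult_right_mono) (auto intro: add_nonneg_nonneg)
      moreover have "3 * e0 + 3 * b \<le> 16 * (e0 + 2 * (sup_norm Vstar)\<^sup>2 + 1)"
        using e00 zero_le_power2[of "sup_norm Vstar"] unfolding b_def by (simp add: algebra_simps)
      ultimately show ?thesis by (rule order_trans[rotated])
    qed
    have "1024 * exp 2 * (e0 + 2 * (sup_norm Vstar)\<^sup>2 + 1) * ((A + 2) * L / u ^ 3)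
        = K * (16 * exp 2 * (e0 + 2 * (sup_norm Vstar)\<^sup>2 + 1))" unfolding Ku by (simp add: field_simps)
    moreover have "C \<le> K * (16 * exp 2 * (e0 + 2 * (sup_norm Vstar)\<^sup>2 + 1))"
      unfolding C_def using X K64 by (intro mult_left_mono) auto
    ultimately have "C \<le> 1024 * exp 2 * (e0 + 2 * (sup_norm Vstar)\<^sup>2 + 1) * ((A + 2) * L / u ^ 3)" by simp
    then have "C / (real k + K) \<le> 1024 * exp 2 * (e0 + 2 * (sup_norm Vstar)\<^sup>2 + 1) * ((A + 2) * L / u ^ 3) / (real k + K)"
      using kK by (intro divide_right_mono) auto
    then show ?thesis by (simp add: e0_def L_def u_def)
  qed
  finally show "measure_pmf.expectation (vtrace_dist P R \<beta> \<pi> \<pi>' cbar \<rho>bar n \<epsilon> V0 k) (\<lambda>V. (sup_norm (\<lambda>s. V s - Vstar s))\<^sup>2)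
     \<le> 1024 * exp 2 * ((sup_norm (\<lambda>s. V0 s - Vstar s))\<^sup>2 + 2 * (sup_norm Vstar)\<^sup>2 + 1)
        * ((A + 2) * ln (real CARD('s)) / (1 - \<gamma>) ^ 3) * (1 / (real k + K))" .
qed

end

theorem theorem3:
  fixes P :: "'a::finite \<Rightarrow> 's::finite \<Rightarrow> 's pmf"
    and R :: "'s \<Rightarrow> 'a \<Rightarrow> real"
    and \<pi> \<pi>' :: "'s \<Rightarrow> 'a pmf"
    and \<beta> cbar \<rho>bar :: real and n :: nat and V0 :: "'s \<Rightarrow> real"
  assumes R_range: "\<And>s a. 0 \<le> R s a \<and> R s a \<le> 1"
    and beta: "0 < \<beta>" "\<beta> < 1"
    and supp: "\<And>s a. pmf (\<pi> s) a > 0 \<Longrightarrow> pmf (\<pi>' s) a > 0"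
    and trunc: "\<rho>bar \<ge> cbar" "cbar > 0"
    and n: "n \<ge> 1"
    and S2: "CARD('s) \<ge> 2"
  defines "\<gamma> \<equiv> vtrace_gamma \<beta> (kappa_c \<pi> \<pi>' cbar) (kappa_rho \<pi> \<pi>' \<rho>bar) n"
    and "A \<equiv> vtrace_A \<beta> cbar \<rho>bar n"
    and "K \<equiv> 64 * (vtrace_A \<beta> cbar \<rho>bar n + 2) * ln (real CARD('s)) / (1 - vtrace_gamma \<beta> (kappa_c \<pi> \<pi>' cbar) (kappa_rho \<pi> \<pi>' \<rho>bar) n) ^ 3"
    and "\<epsilon> \<equiv> (\<lambda>k::nat. (4 / (1 - vtrace_gamma \<beta> (kappa_c \<pi> \<pi>' cbar) (kappa_rho \<pi> \<pi>' \<rho>bar) n)) / (real k + 64 * (vtrace_A \<beta> cbar \<rho>bar n + 2) * ln (real CARD('s)) / (1 - vtrace_gamma \<beta> (kappa_c \<pi> \<pi>' cbar) (kappa_rho \<pi> \<pi>' \<rho>bar) n) ^ 3))"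
    and "Vstar \<equiv> value_fun P R \<beta> (clipped_policy \<rho>bar \<pi> \<pi>')"
  shows "\<forall>k::nat.
     measure_pmf.expectation (vtrace_dist P R \<beta> \<pi> \<pi>' cbar \<rho>bar n \<epsilon> V0 k)
        (\<lambda>V. (sup_norm (\<lambda>s. V s - Vstar s))\<^sup>2)
     \<le> 1024 * exp 2 * ((sup_norm (\<lambda>s. V0 s - Vstar s))\<^sup>2 + 2 * (sup_norm Vstar)\<^sup>2 + 1)
        * ((A + 2) * ln (real CARD('s)) / (1 - \<gamma>) ^ 3) * (1 / (real k + K))"
  proof -
  have vt: "vt R \<pi> \<pi>' \<beta> cbar \<rho>bar"
    by unfold_locales (use R_range beta supp trunc in auto)
  show ?thesis using vt.main[OF vt n S2] unfolding \<gamma>_def A_def K_def \<epsilon>_def Vstar_def by simp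
qed

end
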